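(* Let $\mathcal{A}=\{1,\dots,N\}$, $\boldsymbol{\lambda}\in\mathbb{R}_+^N$, $\boldsymbol{\delta}\in\mathbb{R}^N$ with $\delta_i>0$, $B\in\mathbb{R}_+^{N\times N}$ with zero diagonal whose associated directed graph is weakly connected but not strongly connected, $\mathcal{S}\subset\mathbb{R}_+^N$ convex, $w:\mathbb{R}_+^N\to\mathbb{R}$ convex, $\mathbf{c}\in\mathbb{R}_+^N$, and $q_i:\mathbb{R}_+\to(0,1]$ decreasing, strictly convex, continuously differentiable. For $\mathbf{s}\in\mathcal{S}$ let $\bar{\mathbf{p}}^0(\mathbf{s}):=\bar{\mathbf{p}}(\mathbf{s})$ be the unique stable equilibrium of $\dot{\mathbf{p}}=(\mathbf{1}-\mathbf{p})\circ\mathbf{q}(\mathbf{s})\circ(\boldsymbol{\lambda}+B\mathbf{p})-\boldsymbol{\delta}\circ\mathbf{p}$, and for $\epsilon>0$ let $\bar{\mathbf{p}}^\epsilon(\mathbf{s})>\mathbf{0}$ be the unique strictly positive solution of $(\mathbf{1}-\mathbf{p})\circ(\boldsymbol{\lambda}+\epsilon\mathbf{1}+B\mathbf{p})-\mathbf{q}(\mathbf{s})^{-1}\circ\boldsymbol{\delta}\circ\mathbf{p}=\mathbf{0}$. Define $F^*_\epsilon:=\min_{\mathbf{s}\in\mathcal{S}}\big(w(\mathbf{s})+\mathbf{c}^{\mathsf T}\bar{\mathbf{p}}^\epsilon(\mathbf{s})\big)$ for $\epsilon\ge0$. Then $F^*_\epsilon$ is increasing in $\epsilon\ge0$.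
   Context: $\circ$ is the element-wise product; $\mathbf{q}(\mathbf{s})=(q_i(s_i))_i$ and $\mathbf{q}(\mathbf{s})^{-1}$ is its element-wise inverse. The associated graph has an edge $(j,i)$ iff $b_{i,j}>0$. $\mathbf{c}$ is the vector of loss rates of infected systems, and $F^*_0$ is the optimal average cost of the original (unperturbed) problem. *)

theory Defs
  imports "HOL-Analysis.Analysis"
begin

definition graph_edges :: "real^'n^'n \<Rightarrow> ('n \<times> 'n) set" where
  "graph_edges B = {(j, i). B $ i $ j > 0}"

definition weakly_connected :: "real^'n^'n \<Rightarrow> bool" where
  "weakly_connected B \<longleftrightarrow>
     (\<forall>u v. (u, v) \<in> (graph_edges B \<union> (graph_edges B)\<inverse>)\<^sup>*)"

definition strongly_connected :: "real^'n^'n \<Rightarrow> bool" where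
  "strongly_connected B \<longleftrightarrow> (\<forall>u v. (u, v) \<in> (graph_edges B)\<^sup>*)"

definition sis_field ::
  "real^'n \<Rightarrow> real^'n \<Rightarrow> real^'n^'n \<Rightarrow> ('n \<Rightarrow> real \<Rightarrow> real) \<Rightarrow> real^'n
   \<Rightarrow> real^'n \<Rightarrow> real^'n" where
  "sis_field lam delta B q s p =
     (\<chi> i. (1 - p $ i) * q i (s $ i) * (lam $ i + (B *v p) $ i) - delta $ i * p $ i)"

definition prob_box :: "(real^'n) set" where
  "prob_box = {p. \<forall>i. 0 \<le> p $ i \<and> p $ i \<le> 1}"

definition is_solution :: "(real^'n \<Rightarrow> real^'n) \<Rightarrow> (real^'n) set \<Rightarrow> (real \<Rightarrow> real^'n) \<Rightarrow> bool" where
  "is_solution f X x \<longleftrightarrow>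
     (\<forall>t\<ge>0. (x has_vector_derivative f (x t)) (at t within {0..}) \<and> x t \<in> X)"

definition stable_equilibrium :: "(real^'n \<Rightarrow> real^'n) \<Rightarrow> (real^'n) set \<Rightarrow> real^'n \<Rightarrow> bool" where
  "stable_equilibrium f X p \<longleftrightarrow>
     p \<in> X \<and> f p = 0 \<and>
     (\<forall>e>0. \<exists>d>0. \<forall>x. is_solution f X x \<and> dist (x 0) p < d \<longrightarrow>
                         (\<forall>t\<ge>0. dist (x t) p < e)) \<and>
     (\<exists>d>0. \<forall>x. is_solution f X x \<and> dist (x 0) p < d \<longrightarrow> (x \<longlongrightarrow> p) at_top)"

definition pbar ::
  "real^'n \<Rightarrow> real^'n \<Rightarrow> real^'n^'n \<Rightarrow> ('n \<Rightarrow> real \<Rightarrow> real) \<Rightarrow> real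
   \<Rightarrow> real^'n \<Rightarrow> real^'n" where
  "pbar lam delta B q eps s =
     (if eps = 0 then (THE p. stable_equilibrium (sis_field lam delta B q s) prob_box p)
      else (THE p. (\<forall>i. p $ i > 0) \<and>
              (\<forall>i. (1 - p $ i) * (lam $ i + eps + (B *v p) $ i)
                     - delta $ i * p $ i / q i (s $ i) = 0)))"

definition strict_convex_on :: "real set \<Rightarrow> (real \<Rightarrow> real) \<Rightarrow> bool" where
  "strict_convex_on A f \<longleftrightarrow> convex A \<and>
     (\<forall>x\<in>A. \<forall>y\<in>A. x \<noteq> y \<longrightarrow> (\<forall>u. 0 < u \<and> u < 1 \<longrightarrow>
        f ((1 - u) * x + u * y) < (1 - u) * f x + u * f y))"

definition objective ::
  "real^'n \<Rightarrow> real^'n \<Rightarrow> real^'n^'n \<Rightarrow> ('n \<Rightarrow> real \<Rightarrow> real) \<Rightarrow> (real^'n \<Rightarrow> real)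
   \<Rightarrow> real^'n \<Rightarrow> real \<Rightarrow> real^'n \<Rightarrow> real" where
  "objective lam delta B q w c eps s = w s + c \<bullet> pbar lam delta B q eps s"

text \<open>F*_eps = min over S of the objective (stated as an infimum; attainment is assumed
  in the theorem, so this is the minimum).\<close>
definition Fstar ::
  "real^'n \<Rightarrow> real^'n \<Rightarrow> real^'n^'n \<Rightarrow> ('n \<Rightarrow> real \<Rightarrow> real) \<Rightarrow> (real^'n \<Rightarrow> real)
   \<Rightarrow> real^'n \<Rightarrow> (real^'n) set \<Rightarrow> real \<Rightarrow> real" where
  "Fstar lam delta B q w c S eps = (INF s\<in>S. objective lam delta B q w c eps s)"

end

theory Submission
  imports Defs
begin

definition fld :: "real^'n \<Rightarrow> real^'n \<Rightarrow> real^'n \<Rightarrow> real^'n^'n \<Rightarrow> real^'n \<Rightarrow> real^'n" where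
  "fld lam a d B x = (\<chi> i. (1 - x$i) * a$i * (lam$i + (B *v x)$i) - d$i * x$i)"

lemma Bv_nth: "(B *v x) $ i = (\<Sum>j\<in>UNIV. B$i$j * x$j)"
  by (simp add: matrix_vector_mult_def)

lemma fld_nth: "fld lam a d B x $ i = (1 - x$i) * a$i * (lam$i + (B *v x)$i) - d$i * x$i"
  by (simp add: fld_def)

lemma Bv_mono:
  assumes "\<forall>j. B$i$j \<ge> (0::real)" "\<forall>j. x$j \<le> y$j"
  shows "(B *v x) $ i \<le> (B *v y) $ i"
  unfolding Bv_nth using assms by (intro sum_mono mult_left_mono) auto

lemma Bv_nonneg:
  assumes "\<forall>j. B$i$j \<ge> (0::real)" "\<forall>j. x$j \<ge> 0"
  shows "(B *v x) $ i \<ge> 0"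
  unfolding Bv_nth using assms by (intro sum_nonneg mult_nonneg_nonneg) auto

lemma fld_coop:
  assumes B: "\<forall>j. B$i$j \<ge> (0::real)" and a: "a$i \<ge> 0"
    and xy: "\<forall>j. x$j \<le> y$j" and eq: "x$i = y$i" and le1: "x$i \<le> 1"
  shows "fld lam a d B x $ i \<le> fld lam a d B y $ i"
proof -
  have "(B *v x) $ i \<le> (B *v y) $ i" by (rule Bv_mono[OF B xy])
  then have "(1 - x$i) * a$i * (lam$i + (B *v x)$i) \<le> (1 - x$i) * a$i * (lam$i + (B *v y)$i)"
    using a le1 by (intro mult_left_mono) auto
  then show ?thesis unfolding fld_nth using eq by simp
qed

lemma Bv_scale: "(B *v (v *\<^sub>R p)) $ i = v * (B *v p) $ i"
  by (simp add: Bv_nth sum_distrib_left algebra_simps)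

lemma fld_scale:
  assumes "fld lam a d B p $ i = 0"
  shows "fld lam a d B (v *\<^sub>R p) $ i = a$i * (1 - v) * (lam$i + v * p$i * (B *v p)$i)"
proof -
  let ?b = "(B *v p)$i"
  have dp: "d$i * p$i = (1 - p$i) * a$i * (lam$i + ?b)" using assms unfolding fld_nth by simp
  have "fld lam a d B (v *\<^sub>R p) $ i = (1 - v * p$i) * a$i * (lam$i + v * ?b) - v * (d$i * p$i)"
    unfolding fld_nth Bv_scale by simp
  also have "\<dots> = (1 - v * p$i) * a$i * (lam$i + v * ?b) - v * ((1 - p$i) * a$i * (lam$i + ?b))"
    by (simp only: dp)
  also have "\<dots> = a$i * (1 - v) * (lam$i + v * p$i * ?b)"
    by (simp add: algebra_simps)
  finally show ?thesis .
qed

lemma fld_concave: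
  assumes B: "\<forall>j. B$i$j \<ge> (0::real)" and a: "a$i \<ge> 0"
    and vn: "\<forall>j. v$j \<ge> 0" and tau: "0 \<le> tau" "tau \<le> 1"
  shows "fld lam a d B (p + tau *\<^sub>R v) $ i \<ge> (1 - tau) * fld lam a d B p $ i + tau * fld lam a d B (p + v) $ i"
proof -
  let ?L = "lam$i + (B *v p)$i" and ?c = "(B *v v)$i"
  have c0: "?c \<ge> 0" by (rule Bv_nonneg[OF B vn])
  have e1: "(B *v (p + tau *\<^sub>R v)) $ i = (B *v p)$i + tau * ?c"
    by (simp add: matrix_vector_right_distrib Bv_scale)
  have e2: "(B *v (p + v)) $ i = (B *v p)$i + ?c"
    by (simp add: matrix_vector_right_distrib)
  have "fld lam a d B (p + tau *\<^sub>R v) $ i - ((1 - tau) * fld lam a d B p $ i + tau * fld lam a d B (p + v) $ i)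
      = a$i * tau * (1 - tau) * v$i * ?c"
    unfolding fld_nth e1 e2 by (simp add: algebra_simps)
  also have "\<dots> \<ge> 0" using a tau vn c0 by simp
  finally show ?thesis by simp
qed

definition nn :: "real^'n \<Rightarrow> bool" where "nn v \<longleftrightarrow> (\<forall>i. v$i \<ge> 0)"
definition nnB :: "real^'n^'n \<Rightarrow> bool" where "nnB B \<longleftrightarrow> (\<forall>i j. B$i$j \<ge> 0)"

lemma fld_diff_eq:
  "fld lam a d B x $ i - fld lam a d B y $ i =
     a$i * ((1 - x$i) * (\<Sum>j\<in>UNIV. B$i$j * (x$j - y$j)) - (x$i - y$i) * (lam$i + (B *v y)$i))
     - d$i * (x$i - y$i)"
proof -
  have "(B *v x)$i - (B *v y)$i = (\<Sum>j\<in>UNIV. B$i$j * (x$j - y$j))"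
    by (simp add: Bv_nth sum_subtractf[symmetric] algebra_simps)
  then show ?thesis unfolding fld_nth by (simp add: algebra_simps)
qed

lemma fld_comp_upper:
  assumes B: "nnB B" and a: "nn a" and d: "nn d" and lam: "nn lam"
    and x: "x \<in> prob_box" and z: "z \<in> prob_box" and xz: "z$i \<le> x$i"
  shows "fld lam a d B x $ i - fld lam a d B z $ i \<le> a$i * (\<Sum>j\<in>UNIV. B$i$j * max 0 (x$j - z$j))"
proof -
  let ?m = "\<Sum>j\<in>UNIV. B$i$j * max 0 (x$j - z$j)"
  have s1: "(\<Sum>j\<in>UNIV. B$i$j * (x$j - z$j)) \<le> ?m"
    using B by (intro sum_mono mult_left_mono) (auto simp: nnB_def)
  have m0: "?m \<ge> 0" using B by (intro sum_nonneg mult_nonneg_nonneg) (auto simp: nnB_def)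
  have x1: "0 \<le> 1 - x$i" "1 - x$i \<le> 1" using x by (auto simp: prob_box_def)
  have "(1 - x$i) * (\<Sum>j\<in>UNIV. B$i$j * (x$j - z$j)) \<le> (1 - x$i) * ?m"
    using s1 x1 by (intro mult_left_mono) auto
  also have "\<dots> \<le> ?m" using x1 m0 by (simp add: mult_left_le_one_le)
  finally have A: "(1 - x$i) * (\<Sum>j\<in>UNIV. B$i$j * (x$j - z$j)) \<le> ?m" .
  have bz: "(B *v z)$i \<ge> 0" using B z by (intro Bv_nonneg) (auto simp: nnB_def prob_box_def)
  have C: "(x$i - z$i) * (lam$i + (B *v z)$i) \<ge> 0" using xz bz lam by (auto simp: nn_def)
  have D: "d$i * (x$i - z$i) \<ge> 0" using d xz by (auto simp: nn_def)
  have ai: "a$i \<ge> 0" using a by (auto simp: nn_def)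
  have XY: "(1 - x$i) * (\<Sum>j\<in>UNIV. B$i$j * (x$j - z$j)) - (x$i - z$i) * (lam$i + (B *v z)$i) \<le> ?m"
    using A C by linarith
  have E: "a$i * ((1 - x$i) * (\<Sum>j\<in>UNIV. B$i$j * (x$j - z$j)) - (x$i - z$i) * (lam$i + (B *v z)$i))
        \<le> a$i * ?m"
    by (rule mult_left_mono[OF XY ai])
  have F: "fld lam a d B x $ i - fld lam a d B z $ i =
     a$i * ((1 - x$i) * (\<Sum>j\<in>UNIV. B$i$j * (x$j - z$j)) - (x$i - z$i) * (lam$i + (B *v z)$i))
     - d$i * (x$i - z$i)" by (rule fld_diff_eq)
  show ?thesis using E F D by (simp only: F)
qed

lemma abs_le_sum_abs: "\<bar>(w::real^'n)$i\<bar> \<le> (\<Sum>j\<in>UNIV. \<bar>w$j\<bar>)"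
  by (rule member_le_sum) auto

lemma sum_abs_le_norm: "(\<Sum>j\<in>UNIV. \<bar>(w::real^'n)$j\<bar>) \<le> real CARD('n) * norm w"
proof -
  have "(\<Sum>j\<in>UNIV. \<bar>w$j\<bar>) \<le> (\<Sum>j\<in>(UNIV::'n set). norm w)"
    by (intro sum_mono component_le_norm_cart)
  then show ?thesis by simp
qed

lemma fld_lipschitz:
  fixes lam a d :: "real^'n" and B :: "real^'n^'n"
  assumes B: "nnB B" and a: "nn a" and d: "nn d" and lam: "nn lam"
  shows "\<exists>L\<ge>0. \<forall>x y. x \<in> prob_box \<longrightarrow> y \<in> prob_box \<longrightarrow>
           norm (fld lam a d B x - fld lam a d B y) \<le> L * norm (x - y)"
proof -
  define As where "As = (\<Sum>i\<in>UNIV. a$i)"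
  define Ds where "Ds = (\<Sum>i\<in>UNIV. d$i)"
  define Ls where "Ls = (\<Sum>i\<in>UNIV. lam$i)"
  define Bs where "Bs = (\<Sum>i\<in>UNIV. \<Sum>j\<in>UNIV. B$i$j)"
  define C where "C = As * (2 * Bs + Ls) + Ds"
  define N where "N = real CARD('n)"
  have aA: "a$i \<le> As" for i unfolding As_def using a by (intro member_le_sum) (auto simp: nn_def)
  have dD: "d$i \<le> Ds" for i unfolding Ds_def using d by (intro member_le_sum) (auto simp: nn_def)
  have lL: "lam$i \<le> Ls" for i unfolding Ls_def using lam by (intro member_le_sum) (auto simp: nn_def)
  have rowB: "(\<Sum>j\<in>UNIV. B$i$j) \<le> Bs" for i unfolding Bs_def
    using B by (intro member_le_sum) (auto simp: nnB_def intro!: sum_nonneg)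
  have bB: "B$i$j \<le> Bs" for i j
  proof -
    have "B$i$j \<le> (\<Sum>j\<in>UNIV. B$i$j)" using B by (intro member_le_sum) (auto simp: nnB_def)
    then show ?thesis using rowB[of i] by linarith
  qed
  have As0: "As \<ge> 0" unfolding As_def using a by (intro sum_nonneg) (auto simp: nn_def)
  have Ds0: "Ds \<ge> 0" unfolding Ds_def using d by (intro sum_nonneg) (auto simp: nn_def)
  have Ls0: "Ls \<ge> 0" unfolding Ls_def using lam by (intro sum_nonneg) (auto simp: nn_def)
  have Bs0: "Bs \<ge> 0" unfolding Bs_def using B by (intro sum_nonneg) (auto simp: nnB_def)
  have C0: "C \<ge> 0" unfolding C_def using As0 Ds0 Ls0 Bs0 by simp
  have N0: "N \<ge> 0" unfolding N_def by simp
  have comp: "\<bar>fld lam a d B x $ i - fld lam a d B y $ i\<bar> \<le> C * (\<Sum>j\<in>UNIV. \<bar>(x - y)$j\<bar>)"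
    if x: "x \<in> prob_box" and y: "y \<in> prob_box" for x y i
  proof -
    define S where "S = (\<Sum>j\<in>UNIV. \<bar>(x - y)$j\<bar>)"
    have S0: "S \<ge> 0" unfolding S_def by (simp add: sum_nonneg)
    have xi: "\<bar>x$i - y$i\<bar> \<le> S" unfolding S_def using abs_le_sum_abs[of "x - y" i] by simp
    have s1: "\<bar>\<Sum>j\<in>UNIV. B$i$j * (x$j - y$j)\<bar> \<le> Bs * S"
    proof -
      have "\<bar>\<Sum>j\<in>UNIV. B$i$j * (x$j - y$j)\<bar> \<le> (\<Sum>j\<in>UNIV. \<bar>B$i$j * (x$j - y$j)\<bar>)"
        by (rule sum_abs)
      also have "\<dots> \<le> (\<Sum>j\<in>UNIV. Bs * \<bar>(x - y)$j\<bar>)"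
        using B bB by (intro sum_mono) (auto simp: abs_mult nnB_def intro: mult_right_mono)
      also have "\<dots> = Bs * S" unfolding S_def by (simp add: sum_distrib_left)
      finally show ?thesis .
    qed
    have x1: "\<bar>1 - x$i\<bar> \<le> 1" using x by (auto simp: prob_box_def)
    have by0: "(B *v y)$i \<ge> 0" using B y by (intro Bv_nonneg) (auto simp: nnB_def prob_box_def)
    have byB: "(B *v y)$i \<le> Bs"
    proof -
      have "(B *v y)$i \<le> (\<Sum>j\<in>UNIV. B$i$j)" unfolding Bv_nth
        using B y by (intro sum_mono) (auto simp: nnB_def prob_box_def intro!: mult_right_le_one_le)
      then show ?thesis using rowB[of i] by linarith
    qed
    have lam0: "lam$i \<ge> 0" using lam by (auto simp: nn_def)
    have t1: "\<bar>(1 - x$i) * (\<Sum>j\<in>UNIV. B$i$j * (x$j - y$j))\<bar> \<le> Bs * S"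
    proof -
      have "\<bar>1 - x$i\<bar> * \<bar>\<Sum>j\<in>UNIV. B$i$j * (x$j - y$j)\<bar> \<le> \<bar>\<Sum>j\<in>UNIV. B$i$j * (x$j - y$j)\<bar>"
        using x1 by (intro mult_left_le_one_le) auto
      then show ?thesis using s1 by (simp add: abs_mult)
    qed
    have t2: "\<bar>(x$i - y$i) * (lam$i + (B *v y)$i)\<bar> \<le> S * (Ls + Bs)"
      using xi lL[of i] byB by0 lam0 S0 by (simp add: abs_mult) (intro mult_mono, auto)
    have t3: "\<bar>(1 - x$i) * (\<Sum>j\<in>UNIV. B$i$j * (x$j - y$j)) - (x$i - y$i) * (lam$i + (B *v y)$i)\<bar>
        \<le> S * (2 * Bs + Ls)"
    proof -
      have "\<bar>(1 - x$i) * (\<Sum>j\<in>UNIV. B$i$j * (x$j - y$j)) - (x$i - y$i) * (lam$i + (B *v y)$i)\<bar>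
         \<le> \<bar>(1 - x$i) * (\<Sum>j\<in>UNIV. B$i$j * (x$j - y$j))\<bar> + \<bar>(x$i - y$i) * (lam$i + (B *v y)$i)\<bar>"
        by (rule abs_triangle_ineq4)
      moreover have "Bs * S + S * (Ls + Bs) = S * (2 * Bs + Ls)" by (simp add: algebra_simps)
      ultimately show ?thesis using t1 t2 by linarith
    qed
    have ai: "0 \<le> a$i" using a by (auto simp: nn_def)
    have di: "0 \<le> d$i" using d by (auto simp: nn_def)
    have "\<bar>fld lam a d B x $ i - fld lam a d B y $ i\<bar>
        \<le> a$i * \<bar>(1 - x$i) * (\<Sum>j\<in>UNIV. B$i$j * (x$j - y$j)) - (x$i - y$i) * (lam$i + (B *v y)$i)\<bar>
          + d$i * \<bar>x$i - y$i\<bar>"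
    proof -
      let ?X = "(1 - x$i) * (\<Sum>j\<in>UNIV. B$i$j * (x$j - y$j)) - (x$i - y$i) * (lam$i + (B *v y)$i)"
      have "\<bar>a$i * ?X - d$i * (x$i - y$i)\<bar> \<le> \<bar>a$i * ?X\<bar> + \<bar>d$i * (x$i - y$i)\<bar>"
        by (rule abs_triangle_ineq4)
      also have "\<dots> = a$i * \<bar>?X\<bar> + d$i * \<bar>x$i - y$i\<bar>" using ai di by (simp add: abs_mult)
      finally show ?thesis unfolding fld_diff_eq .
    qed
    also have "\<dots> \<le> As * (S * (2 * Bs + Ls)) + Ds * S"
      using t3 xi ai di aA[of i] dD[of i] S0 Bs0 Ls0
      by (intro add_mono mult_mono) auto
    also have "\<dots> = C * S" unfolding C_def by (simp add: algebra_simps)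
    finally show ?thesis unfolding S_def .
  qed
  show ?thesis
  proof (intro exI[of _ "N * (N * C)"] conjI allI impI)
    show "0 \<le> N * (N * C)" using N0 C0 by simp
    fix x y :: "real^'n" assume x: "x \<in> prob_box" and y: "y \<in> prob_box"
    have "norm (fld lam a d B x - fld lam a d B y) \<le> (\<Sum>i\<in>UNIV. \<bar>(fld lam a d B x - fld lam a d B y)$i\<bar>)"
      by (rule norm_le_l1_cart)
    also have "\<dots> \<le> (\<Sum>i\<in>(UNIV::'n set). C * (N * norm (x - y)))"
    proof (intro sum_mono)
      fix i
      have "\<bar>(fld lam a d B x - fld lam a d B y)$i\<bar> \<le> C * (\<Sum>j\<in>UNIV. \<bar>(x - y)$j\<bar>)"
        using comp[OF x y, of i] by simp
      also have "\<dots> \<le> C * (N * norm (x - y))"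
        using C0 sum_abs_le_norm[of "x - y"] unfolding N_def by (intro mult_left_mono) auto
      finally show "\<bar>(fld lam a d B x - fld lam a d B y)$i\<bar> \<le> C * (N * norm (x - y))" .
    qed
    also have "\<dots> = N * (N * C) * norm (x - y)" unfolding N_def by simp
    finally show "norm (fld lam a d B x - fld lam a d B y) \<le> N * (N * C) * norm (x - y)" .
  qed
qed

primrec pic :: "('a::banach \<Rightarrow> 'a) \<Rightarrow> 'a \<Rightarrow> nat \<Rightarrow> real \<Rightarrow> 'a" where
  "pic F y 0 = (\<lambda>t. y)"
| "pic F y (Suc k) = (\<lambda>t. y + integral {0..t} (\<lambda>s. F (pic F y k s)))"

lemma lipschitz_cont:
  fixes F :: "'a::banach \<Rightarrow> 'a"
  assumes L: "\<And>u v. norm (F u - F v) \<le> L * norm (u - v)" and L0: "0 \<le> L"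
  shows "continuous_on UNIV F"
proof -
  have "L-lipschitz_on UNIV F" using L L0 by (auto simp: lipschitz_on_def dist_norm)
  then show ?thesis by (rule lipschitz_on_continuous_on)
qed

lemma pic_cont:
  fixes F :: "'a::banach \<Rightarrow> 'a"
  assumes L: "\<And>u v. norm (F u - F v) \<le> L * norm (u - v)" and L0: "0 \<le> L"
    and Mb: "\<And>u. norm (F u) \<le> Mb"
  shows "continuous_on {0..} (pic F y k)"
proof (induction k)
  case 0
  then show ?case by simp
next
  case (Suc k)
  have cF: "continuous_on {0..} (\<lambda>s. F (pic F y k s))"
    using continuous_on_compose2[OF lipschitz_cont[OF L L0] Suc] by auto
  have "0 \<le> Mb" using Mb[of 0] norm_ge_zero order.trans by blast
  have key: "dist (pic F y (Suc k) a) (pic F y (Suc k) b) \<le> Mb * dist a b"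
    if "a \<in> {0..}" "b \<in> {0..}" "a \<le> b" for a b
  proof -
    have int: "(\<lambda>s. F (pic F y k s)) integrable_on {0..b}"
      by (rule integrable_continuous_interval) (rule continuous_on_subset[OF cF], auto)
    have "integral {0..a} (\<lambda>s. F (pic F y k s)) + integral {a..b} (\<lambda>s. F (pic F y k s))
        = integral {0..b} (\<lambda>s. F (pic F y k s))"
      using that int by (intro Henstock_Kurzweil_Integration.integral_combine) auto
    then have eq: "pic F y (Suc k) b - pic F y (Suc k) a = integral {a..b} (\<lambda>s. F (pic F y k s))"
      by (simp add: algebra_simps)
    have "norm (integral {a..b} (\<lambda>s. F (pic F y k s))) \<le> Mb * (b - a)"
      using that by (intro integral_bound continuous_on_subset[OF cF]) (auto simp: Mb)
    moreover have "dist (pic F y (Suc k) a) (pic F y (Suc k) b) = norm (integral {a..b} (\<lambda>s. F (pic F y k s)))"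
      by (metis dist_commute dist_norm eq)
    moreover have "dist a b = b - a" using that by (simp add: dist_real_def)
    ultimately show ?thesis by simp
  qed
  have "Mb-lipschitz_on {0..} (pic F y (Suc k))"
    unfolding lipschitz_on_def
  proof (intro conjI ballI)
    fix a b :: real assume "a \<in> {0..}" "b \<in> {0..}"
    show "dist (pic F y (Suc k) a) (pic F y (Suc k) b) \<le> Mb * dist a b"
    proof (cases "a \<le> b")
      case True
      then show ?thesis using key[of a b] \<open>a \<in> {0..}\<close> \<open>b \<in> {0..}\<close> by blast
    next
      case False
      then show ?thesis using key[of b a] \<open>a \<in> {0..}\<close> \<open>b \<in> {0..}\<close>
        by (simp add: dist_commute)
    qed
  qed fact
  from lipschitz_on_continuous_on[OF this] show ?case .
qed

lemma power_has_integral: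
  fixes C t :: real and n :: nat
  assumes "0 \<le> t"
  shows "((\<lambda>s. C * s^n) has_integral (C * t^(Suc n) / Suc n)) {0..t}"
proof -
  have "((\<lambda>s. C * s^n) has_integral (C * t^(Suc n) / Suc n - C * 0^(Suc n) / Suc n)) {0..t}"
  proof (rule fundamental_theorem_of_calculus)
    show "((\<lambda>s. C * s^(Suc n) / Suc n) has_vector_derivative C * x^n) (at x within {0..t})" for x
      unfolding has_real_derivative_iff_has_vector_derivative[symmetric]
      by (rule derivative_eq_intros refl | simp)+
  qed (use assms in auto)
  then show ?thesis by simp
qed

lemma pic_diff:
  fixes F :: "'a::banach \<Rightarrow> 'a"
  assumes L: "\<And>u v. norm (F u - F v) \<le> L * norm (u - v)" and L0: "0 \<le> L"
    and Mb: "\<And>u. norm (F u) \<le> Mb"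
  shows "0 \<le> t \<Longrightarrow> norm (pic F y (Suc k) t - pic F y k t) \<le> Mb * L^k * t^(Suc k) / fact (Suc k)"
proof (induction k arbitrary: t)
  case 0
  have "pic F y (Suc 0) t - pic F y 0 t = t *\<^sub>R F y" using 0 by simp
  then show ?case using 0 Mb[of y] by (simp add: mult_left_mono mult.commute[of Mb])
next
  case (Suc k)
  have c1: "continuous_on {0..t} (\<lambda>s. F (pic F y k s))" for k
    using continuous_on_compose2[OF lipschitz_cont[OF L L0] pic_cont[OF L L0 Mb, of y k]]
    by (rule continuous_on_subset) auto
  have i1: "(\<lambda>s. F (pic F y k s)) integrable_on {0..t}" for k
    by (rule integrable_continuous_interval[OF c1])
  have eq: "pic F y (Suc (Suc k)) t - pic F y (Suc k) t
      = integral {0..t} (\<lambda>s. F (pic F y (Suc k) s) - F (pic F y k s))"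
  proof -
    have e1: "pic F y (Suc (Suc k)) t = y + integral {0..t} (\<lambda>s. F (pic F y (Suc k) s))"
      by (simp only: pic.simps(2)[of F y "Suc k"])
    have e2: "pic F y (Suc k) t = y + integral {0..t} (\<lambda>s. F (pic F y k s))"
      by (simp only: pic.simps(2)[of F y k])
    show ?thesis unfolding e1 e2 using integral_diff[OF i1[of "Suc k"] i1[of k]] by simp
  qed
  define C where "C = L * (Mb * L^k / fact (Suc k))"
  have hi: "((\<lambda>s. C * s^(Suc k)) has_integral (C * t^(Suc (Suc k)) / Suc (Suc k))) {0..t}"
    using Suc.prems by (rule power_has_integral)
  have "norm (integral {0..t} (\<lambda>s. F (pic F y (Suc k) s) - F (pic F y k s)))
      \<le> integral {0..t} (\<lambda>s. C * s^(Suc k))"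
  proof (rule integral_norm_bound_integral)
    show "(\<lambda>s. F (pic F y (Suc k) s) - F (pic F y k s)) integrable_on {0..t}"
      by (intro integrable_diff i1)
    show "(\<lambda>s. C * s ^ Suc k) integrable_on {0..t}" using hi by blast
    fix s assume s: "s \<in> {0..t}"
    have "norm (F (pic F y (Suc k) s) - F (pic F y k s)) \<le> L * norm (pic F y (Suc k) s - pic F y k s)"
      by (rule L)
    also have "\<dots> \<le> L * (Mb * L^k * s^(Suc k) / fact (Suc k))"
      using Suc.IH[of s] s L0 by (intro mult_left_mono) auto
    also have "\<dots> = C * s^(Suc k)" by (simp add: C_def)
    finally show "norm (F (pic F y (Suc k) s) - F (pic F y k s)) \<le> C * s^(Suc k)" .
  qed
  also have "\<dots> = C * t^(Suc (Suc k)) / Suc (Suc k)" using hi by (rule integral_unique)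
  also have "\<dots> = Mb * L ^ Suc k * t ^ Suc (Suc k) / fact (Suc (Suc k))"
    by (simp add: C_def field_simps)
  finally show ?case using eq by simp
qed

lemma pic_unif:
  fixes F :: "'a::banach \<Rightarrow> 'a"
  assumes L: "\<And>u v. norm (F u - F v) \<le> L * norm (u - v)" and L0: "0 \<le> L"
    and Mb: "\<And>u. norm (F u) \<le> Mb" and T: "0 \<le> T"
  shows "uniform_limit {0..T} (\<lambda>n t. pic F y n t)
           (\<lambda>t. y + suminf (\<lambda>j. pic F y (Suc j) t - pic F y j t)) sequentially"
proof -
  have Mb0: "0 \<le> Mb" using Mb[of 0] norm_ge_zero order.trans by blast
  define M where "M j = Mb * L^j * T^(Suc j) / fact (Suc j)" for j
  have bnd: "norm (pic F y (Suc j) t - pic F y j t) \<le> M j" if "t \<in> {0..T}" for j t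
  proof -
    have "norm (pic F y (Suc j) t - pic F y j t) \<le> Mb * L^j * t^(Suc j) / fact (Suc j)"
      using that by (intro pic_diff[OF L L0 Mb]) auto
    also have "\<dots> \<le> M j" unfolding M_def using that Mb0 L0
      by (intro divide_right_mono mult_left_mono power_mono) auto
    finally show ?thesis .
  qed
  have sM: "summable M"
  proof (rule summable_comparison_test')
    show "summable (\<lambda>j. Mb * T * ((L*T)^j /\<^sub>R fact j))"
      by (intro summable_mult summable_exp_generic)
    fix j :: nat assume "j \<ge> 0"
    have "M j = Mb * T * ((L*T)^j / fact (Suc j))" unfolding M_def
      by (simp add: power_mult_distrib field_simps)
    also have "\<dots> \<le> Mb * T * ((L*T)^j / fact j)"
      using Mb0 T L0 by (intro mult_left_mono divide_left_mono) (auto simp: fact_mono)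
    finally show "norm (M j) \<le> Mb * T * ((L*T)^j /\<^sub>R fact j)"
      using Mb0 T L0 by (simp add: M_def divide_inverse_commute)
  qed
  have U: "uniform_limit {0..T} (\<lambda>n t. \<Sum>j<n. pic F y (Suc j) t - pic F y j t)
      (\<lambda>t. suminf (\<lambda>j. pic F y (Suc j) t - pic F y j t)) sequentially"
    by (rule Weierstrass_m_test[OF bnd sM])
  show ?thesis
  proof (rule uniform_limitI)
    fix e :: real assume "e > 0"
    from uniform_limitD[OF U this] show "\<forall>\<^sub>F n in sequentially. \<forall>t\<in>{0..T}.
        dist (pic F y n t) (y + (\<Sum>j. pic F y (Suc j) t - pic F y j t)) < e"
    proof (rule eventually_mono)
      fix n assume H: "\<forall>t\<in>{0..T}. dist (\<Sum>j<n. pic F y (Suc j) t - pic F y j t)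
                (\<Sum>j. pic F y (Suc j) t - pic F y j t) < e"
      show "\<forall>t\<in>{0..T}. dist (pic F y n t) (y + (\<Sum>j. pic F y (Suc j) t - pic F y j t)) < e"
      proof
        fix t assume "t \<in> {0..T}"
        with H have "dist (\<Sum>j<n. pic F y (Suc j) t - pic F y j t)
                (\<Sum>j. pic F y (Suc j) t - pic F y j t) < e" by blast
        moreover have "(\<Sum>j<n. pic F y (Suc j) t - pic F y j t) = pic F y n t - y"
          using sum_lessThan_telescope[of "\<lambda>j. pic F y j t" n] by simp
        moreover have "\<And>A S P. dist A S < e \<Longrightarrow> A = P - y \<Longrightarrow> dist P (y+S) < e"
          by (metis add.commute diff_diff_eq dist_norm)
        ultimately show "dist (pic F y n t) (y + (\<Sum>j. pic F y (Suc j) t - pic F y j t)) < e"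
          by blast
      qed
    qed
  qed
qed

lemma pic_zero: "pic F y n 0 = y"
  by (cases n) auto

theorem picard:
  fixes F :: "'a::banach \<Rightarrow> 'a"
  assumes L: "\<And>u v. norm (F u - F v) \<le> L * norm (u - v)" and L0: "0 \<le> L"
    and Mb: "\<And>u. norm (F u) \<le> Mb"
  shows "\<exists>x. x 0 = y \<and> (\<forall>t\<ge>0. (x has_vector_derivative F (x t)) (at t within {0..}))"
proof -
  define x where "x t = y + suminf (\<lambda>j. pic F y (Suc j) t - pic F y j t)" for t
  have U: "uniform_limit {0..T} (\<lambda>n t. pic F y n t) x sequentially" if "0 \<le> T" for T
    unfolding x_def by (rule pic_unif[OF L L0 Mb that])
  have cF: "continuous_on UNIV F" by (rule lipschitz_cont[OF L L0])
  have cx: "continuous_on {0..T} x" if "0 \<le> T" for T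
  proof (rule uniform_limit_theorem[OF _ U[OF that]])
    show "\<forall>\<^sub>F n in sequentially. continuous_on {0..T} (pic F y n)"
      by (intro always_eventually allI continuous_on_subset[OF pic_cont[OF L L0 Mb]]) auto
  qed simp
  have cFx: "continuous_on {0..T} (\<lambda>s. F (x s))" if "0 \<le> T" for T
    using continuous_on_compose2[OF cF cx[OF that]] by auto
  have inteq: "x t = y + integral {0..t} (\<lambda>s. F (x s))" if t: "0 \<le> t" for t
  proof -
    have l1: "(\<lambda>n. pic F y (Suc n) t) \<longlonglongrightarrow> x t"
      using LIMSEQ_Suc[OF tendsto_uniform_limitI[OF U[OF t], of t]] t by auto
    have l2: "(\<lambda>n. integral {0..t} (\<lambda>s. F (pic F y n s))) \<longlonglongrightarrow> integral {0..t} (\<lambda>s. F (x s))"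
    proof (rule LIMSEQ_I)
      fix e :: real assume e: "0 < e"
      define e' where "e' = e / (L * t + 1)"
      have "L * t + 1 > 0" using L0 t by (simp add: add_nonneg_pos)
      then have e': "e' > 0" using e by (simp add: e'_def)
      obtain N where N: "\<And>n. n \<ge> N \<Longrightarrow> \<forall>s\<in>{0..t}. dist (pic F y n s) (x s) < e'"
        using uniform_limitD[OF U[OF t] e'] unfolding eventually_sequentially by blast
      show "\<exists>N. \<forall>n\<ge>N. norm (integral {0..t} (\<lambda>s. F (pic F y n s)) - integral {0..t} (\<lambda>s. F (x s))) < e"
      proof (intro exI allI impI)
        fix n assume n: "n \<ge> N"
        have cP: "continuous_on {0..t} (\<lambda>s. F (pic F y n s))"
          using continuous_on_compose2[OF cF pic_cont[OF L L0 Mb, of y n]]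
          by (rule continuous_on_subset) auto
        have "integral {0..t} (\<lambda>s. F (pic F y n s)) - integral {0..t} (\<lambda>s. F (x s))
            = integral {0..t} (\<lambda>s. F (pic F y n s) - F (x s))"
          by (intro integral_diff[symmetric] integrable_continuous_interval cP cFx t)
        also have "norm \<dots> \<le> (L * e') * (t - 0)"
        proof (rule integral_bound)
          show "continuous_on {0..t} (\<lambda>s. F (pic F y n s) - F (x s))"
            by (intro continuous_on_diff cP cFx t)
          fix s assume s: "s \<in> {0..t}"
          have "norm (F (pic F y n s) - F (x s)) \<le> L * norm (pic F y n s - x s)" by (rule L)
          also have "\<dots> \<le> L * e'" using N[OF n] s L0
            by (intro mult_left_mono) (auto simp: dist_norm less_imp_le)
          finally show "norm (F (pic F y n s) - F (x s)) \<le> L * e'" .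
        qed (use t in auto)
        also have "(L * e') * (t - 0) < e"
        proof -
          have "(L * e') * t = e' * (L * t)" by simp
          also have "\<dots> < e' * (L * t + 1)" using e' by simp
          also have "\<dots> = e" unfolding e'_def using \<open>L * t + 1 > 0\<close> by simp
          finally show ?thesis by simp
        qed
        finally show "norm (integral {0..t} (\<lambda>s. F (pic F y n s)) - integral {0..t} (\<lambda>s. F (x s))) < e" .
      qed
    qed
    have "(\<lambda>n. pic F y (Suc n) t) \<longlonglongrightarrow> y + integral {0..t} (\<lambda>s. F (x s))"
      using tendsto_add[OF tendsto_const l2, of y] by simp
    then show ?thesis using l1 LIMSEQ_unique by blast
  qed
  have x0: "x 0 = y" unfolding x_def by (simp add: pic_zero)
  have der: "(x has_vector_derivative F (x t)) (at t within {0..})" if t: "0 \<le> t" for t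
  proof -
    have T: "0 \<le> t + 1" using t by simp
    have dI: "((\<lambda>u. integral {0..u} (\<lambda>s. F (x s))) has_vector_derivative F (x t)) (at t within {0..t+1})"
      using integral_has_vector_derivative[OF cFx[OF T], of t] t by simp
    then have "((\<lambda>u. y + integral {0..u} (\<lambda>s. F (x s))) has_vector_derivative F (x t)) (at t within {0..t+1})"
      using has_vector_derivative_add[OF has_vector_derivative_const[of y] dI] by simp
    then have d1: "(x has_vector_derivative F (x t)) (at t within {0..t+1})"
      by (rule has_vector_derivative_transform[rotated 2]) (use t inteq in auto)
    have "at t within {0..t+1} = at t within {0..}"
      by (rule at_within_nhd[of _ "{..<t+1}"]) auto
    with d1 show ?thesis by simp
  qed
  show ?thesis using x0 der by blast
qed

lemma sqp_deriv: "((\<lambda>u::real. (max 0 u)^2) has_real_derivative 2 * max 0 x) (at x)"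
proof (cases "x > 0")
  case True
  have "((\<lambda>u::real. u^2) has_real_derivative real 2 * x^(2 - Suc 0)) (at x)"
    by (rule DERIV_pow)
  moreover have "real 2 * x^(2 - Suc 0) = 2 * max 0 x" using True by simp
  ultimately have "((\<lambda>u::real. u^2) has_real_derivative 2 * max 0 x) (at x)" by simp
  then show ?thesis
    by (rule has_field_derivative_transform_within_open[of _ _ _ "{0<..}"]) (use True in auto)
next
  case False
  show ?thesis
  proof (cases "x < 0")
    case True
    have "((\<lambda>u::real. 0) has_real_derivative 2 * max 0 x) (at x)" using True by simp
    then show ?thesis
      by (rule has_field_derivative_transform_within_open[of _ _ _ "{..<0}"]) (use True in auto)
  next
    case False
    with \<open>\<not> x > 0\<close> have x0: "x = 0" by simp
    have "((\<lambda>y::real. ((max 0 y)^2 - (max 0 0)^2) / (y - 0)) \<longlongrightarrow> 0) (at 0)"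
    proof (rule Lim_null_comparison)
      show "\<forall>\<^sub>F y in at 0. norm (((max 0 y)^2 - (max 0 0)^2) / (y - 0)) \<le> \<bar>y\<bar>"
      proof (rule always_eventually, rule allI)
        fix y :: real
        show "norm (((max 0 y)^2 - (max 0 0)^2) / (y - 0)) \<le> \<bar>y\<bar>"
        proof (cases "y > 0")
          case True
          then have "max 0 y = y" "y \<noteq> 0" by auto
          then have "((max 0 y)^2 - (max 0 0)^2) / (y - 0) = y"
            by (simp add: power2_eq_square)
          then show ?thesis by simp
        next
          case False
          then have "max 0 y = 0" by auto
          then show ?thesis by simp
        qed
      qed
      show "((\<lambda>y::real. \<bar>y\<bar>) \<longlongrightarrow> 0) (at 0)"
        using tendsto_rabs_zero[OF tendsto_ident_at[of "0::real" UNIV]] by simp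
    qed
    then show ?thesis using x0 by (simp add: has_field_derivative_iff)
  qed
qed

lemma sqp_chain:
  assumes "(g has_real_derivative g') (at t within S)"
  shows "((\<lambda>t. (max 0 (g t))^2) has_real_derivative (2 * max 0 (g t) * g')) (at t within S)"
  using DERIV_chain2[OF sqp_deriv assms] by simp

lemma deriv_within_nonneg_at:
  assumes "(g has_real_derivative D) (at t within {0..})" "0 < t"
  shows "(g has_real_derivative D) (at t)"
proof -
  have "at t within {0..} = at t within UNIV"
    by (rule at_within_nhd[of _ "{0<..}"]) (use assms in auto)
  then show ?thesis using assms by simp
qed

lemma mono_deriv:
  fixes g g' :: "real \<Rightarrow> real"
  assumes d: "\<And>t. 0 \<le> t \<Longrightarrow> (g has_real_derivative g' t) (at t within {0..})"
    and n: "\<And>t. 0 \<le> t \<Longrightarrow> g' t \<le> 0"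
    and t: "0 \<le> t1" "t1 \<le> t2"
  shows "g t2 \<le> g t1"
proof (rule DERIV_nonpos_imp_decreasing_open[OF t(2)])
  fix x assume "t1 < x" "x < t2"
  then have x0: "0 < x" using t by linarith
  have "DERIV g x :> g' x" using deriv_within_nonneg_at[OF d x0] x0 by simp
  then show "\<exists>y. DERIV g x :> y \<and> y \<le> 0" using n[of x] x0 by auto
next
  have "continuous_on {0..} g"
    unfolding continuous_on_eq_continuous_within
    using d by (auto intro: DERIV_continuous)
  then show "continuous_on {t1..t2} g"
    by (rule continuous_on_subset) (use t in auto)
qed

lemma gronwall_diff:
  fixes phi phi' :: "real \<Rightarrow> real"
  assumes d: "\<And>t. 0 \<le> t \<Longrightarrow> (phi has_real_derivative phi' t) (at t within {0..})"
    and b: "\<And>t. 0 \<le> t \<Longrightarrow> phi' t \<le> K * phi t"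
    and t: "0 \<le> t"
  shows "phi t \<le> phi 0 * exp (K * t)"
proof -
  define psi where "psi s = exp (- K * s) * phi s" for s
  have "psi t \<le> psi 0"
  proof (rule mono_deriv[of psi "\<lambda>s. exp (- K * s) * (phi' s - K * phi s)"])
    fix s :: real assume s: "0 \<le> s"
    have e: "((\<lambda>s. exp (- K * s)) has_real_derivative exp (- K * s) * (- K)) (at s within {0..})"
      using DERIV_chain2[OF DERIV_exp, of "\<lambda>s. - K * s" "- K" s "{0..}"]
        DERIV_cmult[OF DERIV_ident, of "- K"] by simp
    have "((\<lambda>s. exp (- K * s) * phi s) has_real_derivative
            (exp (- K * s) * (- K)) * phi s + phi' s * exp (- K * s)) (at s within {0..})"
      by (rule DERIV_mult[OF e d[OF s]])
    then show "(psi has_real_derivative exp (- K * s) * (phi' s - K * phi s)) (at s within {0..})"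
      unfolding psi_def by (simp add: algebra_simps)
    show "exp (- K * s) * (phi' s - K * phi s) \<le> 0"
      using b[OF s] by (simp add: mult_nonneg_nonpos)
  qed (use t in auto)
  then have "exp (- K * t) * phi t \<le> phi 0" by (simp add: psi_def)
  then have "exp (K * t) * (exp (- K * t) * phi t) \<le> exp (K * t) * phi 0"
    by (intro mult_left_mono) auto
  moreover have "exp (K * t) * exp (- K * t) = 1" by (simp add: exp_add[symmetric])
  then have "exp (K * t) * (exp (- K * t) * phi t) = phi t" by (metis mult.assoc mult_1)
  ultimately have "phi t \<le> exp (K * t) * phi 0" by linarith
  then show ?thesis by (simp add: mult.commute)
qed

locale sis =
  fixes lam a d :: "real^'n" and B :: "real^'n^'n"
  assumes lam: "nn lam" and apos: "\<forall>i. a$i > 0" and dpos: "\<forall>i. d$i > 0" and B: "nnB B"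
begin

abbreviation "f \<equiv> fld lam a d B"

lemma a_nn: "nn a" using apos by (auto simp: nn_def less_imp_le)
lemma d_nn: "nn d" using dpos by (auto simp: nn_def less_imp_le)

definition Lf where
  "Lf = (SOME L. L \<ge> 0 \<and> (\<forall>x y. x \<in> prob_box \<longrightarrow> y \<in> prob_box \<longrightarrow> norm (f x - f y) \<le> L * norm (x - y)))"

lemma Lf: "Lf \<ge> 0" "\<And>x y. x \<in> prob_box \<Longrightarrow> y \<in> prob_box \<Longrightarrow> norm (f x - f y) \<le> Lf * norm (x - y)"
proof -
  have "\<exists>L. L \<ge> 0 \<and> (\<forall>x y. x \<in> prob_box \<longrightarrow> y \<in> prob_box \<longrightarrow> norm (f x - f y) \<le> L * norm (x - y))"
    using fld_lipschitz[OF B a_nn d_nn lam] by blast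
  from someI_ex[OF this] show "Lf \<ge> 0" "\<And>x y. x \<in> prob_box \<Longrightarrow> y \<in> prob_box \<Longrightarrow> norm (f x - f y) \<le> Lf * norm (x - y)"
    unfolding Lf_def by blast+
qed

lemma sol_comp:
  assumes "is_solution f X x" "0 \<le> t"
  shows "((\<lambda>t. x t $ i) has_real_derivative (f (x t)) $ i) (at t within {0..})"
proof -
  have "(x has_vector_derivative f (x t)) (at t within {0..})" using assms by (auto simp: is_solution_def)
  from bounded_linear.has_vector_derivative[OF bounded_linear_vec_nth this]
  show ?thesis by (simp add: has_real_derivative_iff_has_vector_derivative)
qed

lemma sol_in: "is_solution f X x \<Longrightarrow> 0 \<le> t \<Longrightarrow> x t \<in> X"
  by (auto simp: is_solution_def)

lemma compare:
  assumes x: "is_solution f prob_box x" and z: "is_solution f prob_box z"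
    and x0: "\<forall>i. x 0 $ i \<le> z 0 $ i" and t: "0 \<le> t"
  shows "x t $ i \<le> z t $ i"
proof -
  define p where "p s j = max 0 (x s $ j - z s $ j)" for s j
  define phi where "phi s = (\<Sum>j\<in>UNIV. (p s j)^2)" for s
  define phi' where "phi' s = (\<Sum>j\<in>UNIV. 2 * p s j * (f (x s) $ j - f (z s) $ j))" for s
  define C where "C = (\<Sum>j\<in>UNIV. \<Sum>k\<in>UNIV. a$j * B$j$k)"
  define N where "N = real CARD('n)"
  define K where "K = 2 * C * N"
  have aB0: "0 \<le> a$j * B$j$k" for j k using a_nn B by (auto simp: nn_def nnB_def)
  have aBC: "a$j * B$j$k \<le> C" for j k
  proof -
    have "a$j * B$j$k \<le> (\<Sum>k\<in>UNIV. a$j * B$j$k)" by (rule member_le_sum) (auto simp: aB0)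
    also have "\<dots> \<le> C" unfolding C_def by (rule member_le_sum) (auto intro!: sum_nonneg simp: aB0)
    finally show ?thesis .
  qed
  have p0: "p s j \<ge> 0" for s j by (simp add: p_def)
  have der: "(phi has_real_derivative phi' s) (at s within {0..})" if s: "0 \<le> s" for s
    unfolding phi_def phi'_def p_def
  proof (rule DERIV_sum)
    fix j :: 'n
    have "((\<lambda>s. x s $ j - z s $ j) has_real_derivative (f (x s) $ j - f (z s) $ j)) (at s within {0..})"
      by (intro DERIV_diff sol_comp[OF x s] sol_comp[OF z s])
    from sqp_chain[OF this]
    show "((\<lambda>s. (max 0 (x s $ j - z s $ j))\<^sup>2) has_real_derivative
             2 * max 0 (x s $ j - z s $ j) * (f (x s) $ j - f (z s) $ j)) (at s within {0..})" .
  qed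
  have bnd: "phi' s \<le> K * phi s" if s: "0 \<le> s" for s
  proof -
    have xs: "x s \<in> prob_box" and zs: "z s \<in> prob_box" using sol_in x z s by auto
    have step1: "2 * p s j * (f (x s) $ j - f (z s) $ j) \<le> (\<Sum>k\<in>UNIV. 2 * (a$j * B$j$k) * (p s j * p s k))" for j
    proof (cases "x s $ j - z s $ j > 0")
      case True
      then have "f (x s) $ j - f (z s) $ j \<le> a$j * (\<Sum>k\<in>UNIV. B$j$k * max 0 (x s $ k - z s $ k))"
        by (intro fld_comp_upper[OF B a_nn d_nn lam xs zs]) auto
      then have "2 * p s j * (f (x s) $ j - f (z s) $ j) \<le> 2 * p s j * (a$j * (\<Sum>k\<in>UNIV. B$j$k * p s k))"
        unfolding p_def by (intro mult_left_mono) auto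
      also have "\<dots> = (\<Sum>k\<in>UNIV. 2 * (a$j * B$j$k) * (p s j * p s k))"
        by (simp add: sum_distrib_left algebra_simps)
      finally show ?thesis .
    next
      case False
      then have "p s j = 0" by (simp add: p_def)
      then show ?thesis by simp
    qed
    have step2: "2 * (a$j * B$j$k) * (p s j * p s k) \<le> C * ((p s j)^2 + (p s k)^2)" for j k
    proof -
      have "2 * (p s j * p s k) \<le> (p s j)^2 + (p s k)^2"
        using sum_squares_bound[of "p s j" "p s k"] by (simp add: power2_eq_square algebra_simps)
      then have "(a$j * B$j$k) * (2 * (p s j * p s k)) \<le> (a$j * B$j$k) * ((p s j)^2 + (p s k)^2)"
        using aB0 by (intro mult_left_mono) auto
      also have "\<dots> \<le> C * ((p s j)^2 + (p s k)^2)"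
        using aBC by (intro mult_right_mono) auto
      finally show ?thesis by (simp add: algebra_simps)
    qed
    have "phi' s \<le> (\<Sum>j\<in>UNIV. \<Sum>k\<in>UNIV. 2 * (a$j * B$j$k) * (p s j * p s k))"
      unfolding phi'_def by (intro sum_mono step1)
    also have "\<dots> \<le> (\<Sum>j\<in>UNIV. \<Sum>k\<in>(UNIV::'n set). C * ((p s j)^2 + (p s k)^2))"
      by (intro sum_mono step2)
    also have "\<dots> = C * ((\<Sum>j\<in>UNIV. \<Sum>k\<in>(UNIV::'n set). (p s j)^2) + (\<Sum>j\<in>(UNIV::'n set). \<Sum>k\<in>UNIV. (p s k)^2))"
      by (simp add: sum_distrib_left sum.distrib algebra_simps)
    also have "\<dots> = K * phi s"
      unfolding K_def N_def phi_def by (simp add: sum_distrib_left algebra_simps)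
    finally show ?thesis .
  qed
  have "phi t \<le> phi 0 * exp (K * t)" by (rule gronwall_diff[OF der bnd t])
  moreover have "phi 0 = 0"
  proof -
    have "p 0 j = 0" for j using x0 by (simp add: p_def max_absorb1)
    then show ?thesis by (simp add: phi_def)
  qed
  ultimately have "phi t \<le> 0" by simp
  moreover have "(p t i)^2 \<le> phi t" unfolding phi_def by (rule member_le_sum) auto
  ultimately have "(p t i)^2 \<le> 0" by linarith
  then have "p t i = 0" by (simp add: p_def)
  then show ?thesis by (simp add: p_def)
qed

end

context sis begin

definition inb :: "real^'n \<Rightarrow> real^'n \<Rightarrow> real^'n \<Rightarrow> bool" where
  "inb lo hi u \<longleftrightarrow> (\<forall>j. lo$j \<le> u$j \<and> u$j \<le> hi$j)"

lemma exists_sol_box: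
  assumes lohi: "\<forall>i. 0 \<le> lo$i \<and> lo$i \<le> hi$i \<and> hi$i \<le> 1"
    and bl: "\<And>u i. inb lo hi u \<Longrightarrow> u$i = lo$i \<Longrightarrow> f u $ i \<ge> 0"
    and bh: "\<And>u i. inb lo hi u \<Longrightarrow> u$i = hi$i \<Longrightarrow> f u $ i \<le> 0"
    and y: "inb lo hi y"
  shows "\<exists>x. x 0 = y \<and> is_solution f prob_box x \<and> (\<forall>t\<ge>0. inb lo hi (x t))"
proof -
  define c where "c u = (\<chi> j. max (lo$j) (min (hi$j) (u$j)))" for u :: "real^'n"
  have c_nth: "c u $ j = max (lo$j) (min (hi$j) (u$j))" for u j by (simp add: c_def)
  have c_in: "inb lo hi (c u)" for u using lohi by (auto simp: inb_def c_nth)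
  have inb_box: "inb lo hi u \<Longrightarrow> u \<in> prob_box" for u using lohi
    by (auto simp: inb_def prob_box_def) (meson order_trans)+
  have c_id: "inb lo hi u \<Longrightarrow> c u = u" for u by (simp add: vec_eq_iff c_nth inb_def)
  have c_lip: "norm (c u - c v) \<le> norm (u - v)" for u v
  proof (rule norm_le_componentwise_cart)
    fix j show "norm ((c u - c v) $ j) \<le> norm ((u - v) $ j)"
      by (simp add: c_nth)
  qed
  define F where "F u = f (c u)" for u
  define N where "N = real CARD('n)"
  have FL: "norm (F u - F v) \<le> Lf * norm (u - v)" for u v
  proof -
    have "norm (F u - F v) \<le> Lf * norm (c u - c v)"
      unfolding F_def by (rule Lf(2)) (auto intro: inb_box c_in)
    also have "\<dots> \<le> Lf * norm (u - v)" by (intro mult_left_mono c_lip Lf(1))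
    finally show ?thesis .
  qed
  have z0: "(0::real^'n) \<in> prob_box" by (simp add: prob_box_def)
  have FM: "norm (F u) \<le> norm (f 0) + Lf * N" for u
  proof -
    have cb: "c u \<in> prob_box" by (rule inb_box[OF c_in])
    have "norm (c u) \<le> (\<Sum>j\<in>UNIV. \<bar>c u $ j\<bar>)" by (rule norm_le_l1_cart)
    also have "\<dots> \<le> (\<Sum>j\<in>(UNIV::'n set). 1)"
      using cb by (intro sum_mono) (auto simp: prob_box_def)
    finally have nc: "norm (c u) \<le> N" by (simp add: N_def)
    have "norm (F u) \<le> norm (f 0) + norm (F u - f 0)" by (metis norm_triangle_sub)
    also have "norm (F u - f 0) \<le> Lf * norm (c u - 0)"
      unfolding F_def by (rule Lf(2)[OF cb z0])
    also have "\<dots> \<le> Lf * N" using nc Lf(1) by (simp add: mult_left_mono)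
    finally show ?thesis by simp
  qed
  obtain x where x0: "x 0 = y" and xd: "\<And>t. 0 \<le> t \<Longrightarrow> (x has_vector_derivative F (x t)) (at t within {0..})"
    using picard[OF FL Lf(1) FM] by blast
  have xcomp: "((\<lambda>t. x t $ i) has_real_derivative F (x t) $ i) (at t within {0..})" if "0 \<le> t" for t i
  proof -
    from bounded_linear.has_vector_derivative[OF bounded_linear_vec_nth xd[OF that]]
    show ?thesis by (simp add: has_real_derivative_iff_has_vector_derivative)
  qed
  have lower: "lo$i \<le> x t $ i" if t: "0 \<le> t" for t i
  proof -
    define g where "g s = (max 0 (lo$i - x s $ i))^2" for s
    have "g t \<le> g 0"
    proof (rule mono_deriv[of g "\<lambda>s. 2 * max 0 (lo$i - x s $ i) * (- F (x s) $ i)"])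
      fix s :: real assume s: "0 \<le> s"
      have "((\<lambda>s. lo$i - x s $ i) has_real_derivative (0 - F (x s) $ i)) (at s within {0..})"
        by (intro DERIV_diff DERIV_const xcomp s)
      from sqp_chain[OF this]
      show "(g has_real_derivative 2 * max 0 (lo$i - x s $ i) * (- F (x s) $ i)) (at s within {0..})"
        unfolding g_def by simp
      show "2 * max 0 (lo$i - x s $ i) * (- F (x s) $ i) \<le> 0"
      proof (cases "x s $ i < lo$i")
        case True
        then have "c (x s) $ i = lo$i" using lohi by (simp add: c_nth)
        then have "F (x s) $ i \<ge> 0" unfolding F_def by (intro bl c_in)
        then show ?thesis using True by (simp add: mult_nonneg_nonpos)
      next
        case False then show ?thesis by simp
      qed
    qed (use t in auto)
    moreover have "g 0 = 0" unfolding g_def using x0 y by (simp add: inb_def)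
    ultimately have "g t \<le> 0" by simp
    then have "max 0 (lo$i - x t $ i) = 0" unfolding g_def by simp
    then show ?thesis by simp
  qed
  have upper: "x t $ i \<le> hi$i" if t: "0 \<le> t" for t i
  proof -
    define g where "g s = (max 0 (x s $ i - hi$i))^2" for s
    have "g t \<le> g 0"
    proof (rule mono_deriv[of g "\<lambda>s. 2 * max 0 (x s $ i - hi$i) * (F (x s) $ i)"])
      fix s :: real assume s: "0 \<le> s"
      have "((\<lambda>s. x s $ i - hi$i) has_real_derivative (F (x s) $ i - 0)) (at s within {0..})"
        by (intro DERIV_diff DERIV_const xcomp s)
      from sqp_chain[OF this]
      show "(g has_real_derivative 2 * max 0 (x s $ i - hi$i) * (F (x s) $ i)) (at s within {0..})"
        unfolding g_def by simp
      show "2 * max 0 (x s $ i - hi$i) * (F (x s) $ i) \<le> 0"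
      proof (cases "x s $ i > hi$i")
        case True
        then have "c (x s) $ i = hi$i" using lohi by (simp add: c_nth)
        then have "F (x s) $ i \<le> 0" unfolding F_def by (intro bh c_in)
        then show ?thesis using True by (simp add: mult_nonneg_nonpos)
      next
        case False then show ?thesis by simp
      qed
    qed (use t in auto)
    moreover have "g 0 = 0" unfolding g_def using x0 y by (simp add: inb_def)
    ultimately have "g t \<le> 0" by simp
    then have "max 0 (x t $ i - hi$i) = 0" unfolding g_def by simp
    then show ?thesis by simp
  qed
  have xin: "inb lo hi (x t)" if "0 \<le> t" for t using lower upper that by (auto simp: inb_def)
  have "is_solution f prob_box x"
    unfolding is_solution_def
  proof (intro allI impI conjI)
    fix t :: real assume t: "0 \<le> t"
    have "F (x t) = f (x t)" unfolding F_def using c_id[OF xin[OF t]] by simp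
    then show "(x has_vector_derivative f (x t)) (at t within {0..})" using xd[OF t] by simp
    show "x t \<in> prob_box" by (rule inb_box[OF xin[OF t]])
  qed
  then show ?thesis using x0 xin by blast
qed

lemma sol_shift:
  assumes x: "is_solution f X x" and h: "0 \<le> h"
  shows "is_solution f X (\<lambda>t. x (t + h))"
  unfolding is_solution_def
proof (intro allI impI conjI)
  fix t :: real assume t: "0 \<le> t"
  have d1: "((\<lambda>t. t + h) has_vector_derivative 1) (at t within {0..})"
    by (auto intro!: derivative_eq_intros)
  have "(x has_vector_derivative f (x (t + h))) (at (t + h) within {0..})"
    using x t h by (auto simp: is_solution_def)
  then have d2: "(x has_vector_derivative f (x (t + h))) (at (t + h) within (\<lambda>t. t + h) ` {0..})"
    by (rule has_vector_derivative_within_subset) (use h in auto)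
  from vector_diff_chain_within[OF d1 d2]
  show "((\<lambda>t. x (t + h)) has_vector_derivative f (x (t + h))) (at t within {0..})"
    by (simp add: o_def)
  show "x (t + h) \<in> X" using x t h by (auto simp: is_solution_def)
qed

lemma sol_const:
  assumes "f p = 0" "p \<in> X"
  shows "is_solution f X (\<lambda>t. p)"
  using assms by (auto simp: is_solution_def)

end

lemma mono_deriv_from:
  fixes g g' :: "real \<Rightarrow> real"
  assumes d: "\<And>t. 0 \<le> t \<Longrightarrow> (g has_real_derivative g' t) (at t within {0..})"
    and n: "\<And>t. T \<le> t \<Longrightarrow> g' t \<le> 0"
    and t: "0 \<le> T" "T \<le> t1" "t1 \<le> t2"
  shows "g t2 \<le> g t1"
proof (rule DERIV_nonpos_imp_decreasing_open[OF t(3)])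
  fix x assume "t1 < x" "x < t2"
  then have x0: "0 < x" "T \<le> x" using t by linarith+
  have "DERIV g x :> g' x" using deriv_within_nonneg_at[OF d x0(1)] x0 by simp
  then show "\<exists>y. DERIV g x :> y \<and> y \<le> 0" using n[OF x0(2)] by auto
next
  have "continuous_on {0..} g"
    unfolding continuous_on_eq_continuous_within
    using d by (auto intro: DERIV_continuous)
  then show "continuous_on {t1..t2} g"
    by (rule continuous_on_subset) (use t in auto)
qed

lemma mono_lim_dec:
  fixes g :: "real \<Rightarrow> real"
  assumes m: "\<And>t1 t2. 0 \<le> t1 \<Longrightarrow> t1 \<le> t2 \<Longrightarrow> g t2 \<le> g t1"
    and lb: "\<And>t. 0 \<le> t \<Longrightarrow> lb \<le> g t"
  shows "(g \<longlongrightarrow> Inf (g ` {0..})) at_top" "\<And>t. 0 \<le> t \<Longrightarrow> Inf (g ` {0..}) \<le> g t"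
proof -
  have bdd: "bdd_below (g ` {0..})" using lb by (auto intro!: bdd_belowI[of _ lb])
  show low: "\<And>t. 0 \<le> t \<Longrightarrow> Inf (g ` {0..}) \<le> g t" by (rule cInf_lower[OF _ bdd]) auto
  show "(g \<longlongrightarrow> Inf (g ` {0..})) at_top"
  proof (rule order_tendstoI)
    fix y assume "y < Inf (g ` {0..})"
    then show "\<forall>\<^sub>F x in at_top. y < g x"
      unfolding eventually_at_top_linorder using low by (intro exI[of _ 0]) (auto intro: less_le_trans)
  next
    fix y assume "Inf (g ` {0..}) < y"
    then obtain t0 where t0: "t0 \<in> {0..}" "g t0 < y"
      using cInf_lessD[of "g ` {0..}" y] by auto
    then show "\<forall>\<^sub>F x in at_top. g x < y"
      unfolding eventually_at_top_linorder using m by (intro exI[of _ t0]) (auto intro: le_less_trans)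
  qed
qed

lemma mono_lim_inc:
  fixes g :: "real \<Rightarrow> real"
  assumes m: "\<And>t1 t2. 0 \<le> t1 \<Longrightarrow> t1 \<le> t2 \<Longrightarrow> g t1 \<le> g t2"
    and ub: "\<And>t. 0 \<le> t \<Longrightarrow> g t \<le> ub"
  shows "\<exists>L. (g \<longlongrightarrow> L) at_top \<and> (\<forall>t\<ge>0. g t \<le> L)"
proof -
  have m': "\<And>t1 t2. 0 \<le> t1 \<Longrightarrow> t1 \<le> t2 \<Longrightarrow> - g t2 \<le> - g t1" using m by auto
  have lb': "\<And>t. 0 \<le> t \<Longrightarrow> - ub \<le> - g t" using ub by auto
  note r = mono_lim_dec[of "\<lambda>t. - g t", OF m' lb']
  have "(g \<longlongrightarrow> - Inf ((\<lambda>t. - g t) ` {0..})) at_top"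
    using tendsto_minus[OF r(1)] by simp
  moreover have "\<forall>t\<ge>0. g t \<le> - Inf ((\<lambda>t. - g t) ` {0..})" using r(2) by force
  ultimately show ?thesis by blast
qed

context sis begin

lemma lim_in_box:
  assumes x: "is_solution f prob_box x" and l: "(x \<longlongrightarrow> e) at_top"
  shows "e \<in> prob_box"
proof -
  have "0 \<le> e$i \<and> e$i \<le> 1" for i
  proof -
    have li: "((\<lambda>t. x t $ i) \<longlongrightarrow> e $ i) at_top" by (rule tendsto_vec_nth[OF l])
    have ev: "\<forall>\<^sub>F t in at_top. 0 \<le> x t $ i \<and> x t $ i \<le> 1"
      unfolding eventually_at_top_linorder using sol_in[OF x]
      by (intro exI[of _ 0]) (auto simp: prob_box_def)
    show ?thesis
      using tendsto_lowerbound[OF li eventually_mono[OF ev]] tendsto_upperbound[OF li eventually_mono[OF ev]]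
      by auto
  qed
  then show ?thesis by (simp add: prob_box_def)
qed

lemma lim_equil:
  assumes x: "is_solution f prob_box x" and l: "(x \<longlongrightarrow> e) at_top"
  shows "f e = 0"
proof -
  have eb: "e \<in> prob_box" by (rule lim_in_box[OF x l])
  have "((\<lambda>t. f (x t) - f e) \<longlongrightarrow> 0) at_top"
  proof (rule Lim_null_comparison)
    show "\<forall>\<^sub>F t in at_top. norm (f (x t) - f e) \<le> Lf * norm (x t - e)"
      unfolding eventually_at_top_linorder using sol_in[OF x] eb
      by (intro exI[of _ 0]) (auto intro: Lf(2))
    have "((\<lambda>t. x t - e) \<longlongrightarrow> 0) at_top" using l by (simp add: LIM_zero)
    then show "((\<lambda>t. Lf * norm (x t - e)) \<longlongrightarrow> 0) at_top"
      using tendsto_mult_right_zero tendsto_norm_zero by blast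
  qed
  then have fl: "((\<lambda>t. f (x t)) \<longlongrightarrow> f e) at_top" by (simp add: LIM_zero_iff)
  have "f e $ i = 0" for i
  proof (rule ccontr)
    assume ne: "f e $ i \<noteq> 0"
    have fi: "((\<lambda>t. f (x t) $ i) \<longlongrightarrow> f e $ i) at_top" by (rule tendsto_vec_nth[OF fl])
    have xb: "0 \<le> x t $ i \<and> x t $ i \<le> 1" if "0 \<le> t" for t
      using sol_in[OF x that] by (auto simp: prob_box_def)
    show False
    proof (cases "f e $ i > 0")
      case True
      define eta where "eta = f e $ i / 2"
      have eta: "eta > 0" "eta < f e $ i" using True by (auto simp: eta_def)
      have "\<forall>\<^sub>F t in at_top. eta < f (x t) $ i" by (rule order_tendstoD(1)[OF fi eta(2)])
      then obtain T0 where T0: "\<And>t. t \<ge> T0 \<Longrightarrow> eta < f (x t) $ i"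
        unfolding eventually_at_top_linorder by blast
      define T where "T = max 0 T0"
      have T: "0 \<le> T" "\<And>t. T \<le> t \<Longrightarrow> eta < f (x t) $ i" using T0 by (auto simp: T_def)
      define g where "g t = eta * t - x t $ i" for t
      have "g (T + 2 / eta) \<le> g T"
      proof (rule mono_deriv_from[of g "\<lambda>t. eta - f (x t) $ i" T])
        fix t :: real assume "0 \<le> t"
        then show "(g has_real_derivative eta - f (x t) $ i) (at t within {0..})"
          unfolding g_def using sol_comp[OF x, of t i]
          by (auto intro!: derivative_eq_intros)
      next
        fix t assume "T \<le> t" then show "eta - f (x t) $ i \<le> 0" using T(2) by force
      qed (use T eta in auto)
      then have "x (T + 2 / eta) $ i \<ge> x T $ i + 2"
        using eta by (simp add: g_def algebra_simps)
      then show False using xb[of T] xb[of "T + 2 / eta"] T eta by auto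
    next
      case False
      with ne have neg: "f e $ i < 0" by simp
      define eta where "eta = - f e $ i / 2"
      have eta: "eta > 0" "f e $ i < - eta" using neg by (auto simp: eta_def)
      have "\<forall>\<^sub>F t in at_top. f (x t) $ i < - eta" by (rule order_tendstoD(2)[OF fi eta(2)])
      then obtain T0 where T0: "\<And>t. t \<ge> T0 \<Longrightarrow> f (x t) $ i < - eta"
        unfolding eventually_at_top_linorder by blast
      define T where "T = max 0 T0"
      have T: "0 \<le> T" "\<And>t. T \<le> t \<Longrightarrow> f (x t) $ i < - eta" using T0 by (auto simp: T_def)
      define g where "g t = eta * t + x t $ i" for t
      have "g (T + 2 / eta) \<le> g T"
      proof (rule mono_deriv_from[of g "\<lambda>t. eta + f (x t) $ i" T])
        fix t :: real assume "0 \<le> t"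
        then show "(g has_real_derivative eta + f (x t) $ i) (at t within {0..})"
          unfolding g_def using sol_comp[OF x, of t i]
          by (auto intro!: derivative_eq_intros)
      next
        fix t assume "T \<le> t" then show "eta + f (x t) $ i \<le> 0" using T(2) by force
      qed (use T eta in auto)
      then have "x (T + 2 / eta) $ i + 2 \<le> x T $ i"
        using eta by (simp add: g_def algebra_simps)
      then show False using xb[of T] xb[of "T + 2 / eta"] T eta by auto
    qed
  qed
  then show ?thesis by (simp add: vec_eq_iff)
qed

end

context sis begin

definition one_v :: "real^'n" where "one_v = (\<chi> i. 1)"
definition zero_v :: "real^'n" where "zero_v = (\<chi> i. 0)"

lemma f_at_one: "u$i = 1 \<Longrightarrow> f u $ i \<le> 0"
  using dpos by (simp add: fld_nth less_imp_le)

lemma f_at_zero: "u \<in> prob_box \<Longrightarrow> u$i = 0 \<Longrightarrow> f u $ i \<ge> 0"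
  using apos lam B by (auto simp: fld_nth nn_def nnB_def prob_box_def less_imp_le
      intro!: mult_nonneg_nonneg add_nonneg_nonneg Bv_nonneg)

lemma inb_01: "inb zero_v one_v u \<longleftrightarrow> u \<in> prob_box"
  by (simp add: inb_def zero_v_def one_v_def prob_box_def)

lemma exists_ztraj: "\<exists>x. x 0 = one_v \<and> is_solution f prob_box x"
proof -
  have "\<exists>x. x 0 = one_v \<and> is_solution f prob_box x \<and> (\<forall>t\<ge>0. inb zero_v one_v (x t))"
  proof (rule exists_sol_box)
    show "\<forall>i. 0 \<le> zero_v $ i \<and> zero_v $ i \<le> one_v $ i \<and> one_v $ i \<le> 1"
      by (simp add: zero_v_def one_v_def)
    show "f u $ i \<ge> 0" if "inb zero_v one_v u" "u $ i = zero_v $ i" for u i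
    proof -
      have "u \<in> prob_box" using that(1) inb_01 by simp
      moreover have "u $ i = 0" using that(2) by (simp add: zero_v_def)
      ultimately show ?thesis by (rule f_at_zero)
    qed
    show "f u $ i \<le> 0" if "inb zero_v one_v u" "u $ i = one_v $ i" for u i
      using that f_at_one[of u i] by (simp add: one_v_def)
    show "inb zero_v one_v one_v" by (simp add: inb_def zero_v_def one_v_def)
  qed
  then show ?thesis by blast
qed

definition ztraj where "ztraj = (SOME x. x 0 = one_v \<and> is_solution f prob_box x)"

lemma ztraj: "ztraj 0 = one_v" "is_solution f prob_box ztraj"
  using someI_ex[OF exists_ztraj] unfolding ztraj_def by blast+

lemma le_ztraj:
  assumes x: "is_solution f prob_box x" "0 \<le> t"
  shows "x t $ i \<le> ztraj t $ i"
proof (rule compare[OF x(1) ztraj(2) _ x(2)])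
  show "\<forall>i. x 0 $ i \<le> ztraj 0 $ i"
    using sol_in[OF x(1), of 0] by (simp add: ztraj(1) one_v_def prob_box_def)
qed

lemma ztraj_mono:
  assumes "0 \<le> t1" "t1 \<le> t2"
  shows "ztraj t2 $ i \<le> ztraj t1 $ i"
proof -
  have "is_solution f prob_box (\<lambda>t. ztraj (t + (t2 - t1)))"
    by (rule sol_shift[OF ztraj(2)]) (use assms in auto)
  from le_ztraj[OF this assms(1)] show ?thesis by simp
qed

definition M0 where "M0 = (\<chi> i. Inf ((\<lambda>t. ztraj t $ i) ` {0..}))"

lemma ztraj_lim: "(ztraj \<longlongrightarrow> M0) at_top" and M0_le: "0 \<le> t \<Longrightarrow> M0 $ i \<le> ztraj t $ i"
proof -
  have lb: "\<And>t. 0 \<le> t \<Longrightarrow> 0 \<le> ztraj t $ i" for i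
    using sol_in[OF ztraj(2)] by (auto simp: prob_box_def)
  have r1: "((\<lambda>t. ztraj t $ i) \<longlongrightarrow> Inf ((\<lambda>t. ztraj t $ i) ` {0..})) at_top" for i
    by (rule mono_lim_dec(1)) (auto intro: ztraj_mono lb)
  have r2: "0 \<le> t \<Longrightarrow> Inf ((\<lambda>t. ztraj t $ i) ` {0..}) \<le> ztraj t $ i" for i t
    by (rule mono_lim_dec(2)) (auto intro: ztraj_mono lb)
  show "(ztraj \<longlongrightarrow> M0) at_top"
    by (rule vec_tendstoI) (simp add: M0_def r1)
  show "0 \<le> t \<Longrightarrow> M0 $ i \<le> ztraj t $ i" using r2 by (simp add: M0_def)
qed

lemma M0_box: "M0 \<in> prob_box" and M0_eq: "f M0 = 0"
  using lim_in_box[OF ztraj(2) ztraj_lim] lim_equil[OF ztraj(2) ztraj_lim] by auto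

lemma le_M0_sol:
  assumes x: "is_solution f prob_box x" and w: "\<And>t. 0 \<le> t \<Longrightarrow> w $ i \<le> x t $ i"
  shows "w $ i \<le> M0 $ i"
proof -
  have li: "((\<lambda>t. ztraj t $ i) \<longlongrightarrow> M0 $ i) at_top" by (rule tendsto_vec_nth[OF ztraj_lim])
  have "\<forall>\<^sub>F t in at_top. w $ i \<le> ztraj t $ i"
    unfolding eventually_at_top_linorder
    using w le_ztraj[OF x] by (intro exI[of _ 0]) (auto intro: order_trans)
  then show ?thesis by (rule tendsto_lowerbound[OF li]) simp
qed

lemma sub_sol:
  assumes w: "w \<in> prob_box" and fw: "\<forall>i. f w $ i \<ge> 0"
  shows "\<exists>x. x 0 = w \<and> is_solution f prob_box x \<and> (\<forall>t\<ge>0. \<forall>i. w $ i \<le> x t $ i)"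
proof -
  have "\<exists>x. x 0 = w \<and> is_solution f prob_box x \<and> (\<forall>t\<ge>0. inb w one_v (x t))"
  proof (rule exists_sol_box)
    show "\<forall>i. 0 \<le> w $ i \<and> w $ i \<le> one_v $ i \<and> one_v $ i \<le> 1"
      using w by (simp add: one_v_def prob_box_def)
    show "f u $ i \<ge> 0" if u: "inb w one_v u" "u $ i = w $ i" for u i
    proof -
      have "f w $ i \<le> f u $ i"
        using u w B a_nn by (intro fld_coop) (auto simp: inb_def nnB_def nn_def prob_box_def)
      then show ?thesis using fw by (meson order_trans)
    qed
    show "f u $ i \<le> 0" if "inb w one_v u" "u $ i = one_v $ i" for u i
      using that f_at_one[of u i] by (simp add: one_v_def)
    show "inb w one_v w" using w by (simp add: inb_def one_v_def prob_box_def)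
  qed
  then show ?thesis by (auto simp: inb_def)
qed

lemma sub_le_M0:
  assumes w: "w \<in> prob_box" and fw: "\<forall>i. f w $ i \<ge> 0"
  shows "w $ i \<le> M0 $ i"
proof -
  obtain x where x: "x 0 = w" "is_solution f prob_box x" "\<forall>t\<ge>0. \<forall>i. w $ i \<le> x t $ i"
    using sub_sol[OF w fw] by blast
  show ?thesis by (rule le_M0_sol[OF x(2)]) (use x(3) in auto)
qed

lemma equil_le_M0:
  assumes "p \<in> prob_box" "f p = 0"
  shows "p $ i \<le> M0 $ i"
  using sub_le_M0[of p i] assms by simp

end

context sis begin

lemma scale_box: "p \<in> prob_box \<Longrightarrow> 0 \<le> v \<Longrightarrow> v \<le> 1 \<Longrightarrow> v *\<^sub>R p \<in> prob_box"
  by (auto simp: prob_box_def intro: mult_le_one)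

lemma f_scale_M0: "0 \<le> v \<Longrightarrow> v \<le> 1 \<Longrightarrow> f (v *\<^sub>R M0) $ i \<ge> 0"
proof -
  assume v: "0 \<le> v" "v \<le> 1"
  have "f (v *\<^sub>R M0) $ i = a$i * (1 - v) * (lam$i + v * M0$i * (B *v M0)$i)"
    by (rule fld_scale) (simp add: M0_eq)
  moreover have "(B *v M0)$i \<ge> 0" using B M0_box by (intro Bv_nonneg) (auto simp: nnB_def prob_box_def)
  moreover have "a$i \<ge> 0" using apos by (simp add: less_imp_le)
  moreover have "lam$i \<ge> 0" using lam by (simp add: nn_def)
  moreover have "M0$i \<ge> 0" using M0_box by (simp add: prob_box_def)
  ultimately show ?thesis using v by simp
qed

lemma M0_pos_drive: "M0$i > 0 \<Longrightarrow> lam$i + (B *v M0)$i > 0"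
proof -
  assume m: "M0$i > 0"
  have "0 = (1 - M0$i) * a$i * (lam$i + (B *v M0)$i) - d$i * M0$i"
    using M0_eq fld_nth[of lam a d B M0 i] by simp
  moreover have "d$i * M0$i > 0" using dpos m by simp
  ultimately have "(1 - M0$i) * a$i * (lam$i + (B *v M0)$i) > 0" by linarith
  moreover have "(1 - M0$i) * a$i \<ge> 0" using M0_box apos by (auto simp: prob_box_def less_imp_le)
  ultimately show ?thesis by (metis mult_le_0_iff not_less)
qed

lemma squeeze_eq:
  assumes e: "e \<in> prob_box" "f e = 0" and v: "0 < v"
    and lo: "\<forall>i. v * M0$i \<le> e$i" and hi: "\<forall>i. e$i \<le> M0$i"
  shows "e = M0"
proof (rule ccontr)
  assume "e \<noteq> M0"
  then obtain k where k: "e$k \<noteq> M0$k" by (auto simp: vec_eq_iff)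
  with hi have ek: "e$k < M0$k" by (meson le_less)
  have M0n: "M0$j \<ge> 0" for j using M0_box by (auto simp: prob_box_def)
  have en: "e$j \<ge> 0" for j using e by (auto simp: prob_box_def)
  define P where "P = {j. M0$j > 0}"
  have kP: "k \<in> P" using ek en[of k] by (auto simp: P_def)
  define r where "r j = e$j / M0$j" for j
  define w where "w = Min (r ` P)"
  have fin: "finite (r ` P)" by simp
  have ne: "r ` P \<noteq> {}" using kP by auto
  obtain i where iP: "i \<in> P" and ri: "r i = w" using Min_in[OF fin ne] unfolding w_def by auto
  have wle: "w \<le> r j" if "j \<in> P" for j unfolding w_def using that by (intro Min_le) auto
  have rk: "r k < 1" using ek kP by (simp add: r_def P_def)
  have w1: "w < 1" using wle[OF kP] rk by linarith
  have wv: "v \<le> w"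
  proof -
    have "v \<le> r i" using lo[rule_format, of i] iP by (simp add: r_def P_def pos_le_divide_eq mult.commute)
    then show ?thesis using ri by simp
  qed
  have w0: "0 < w" using v wv by linarith
  have ge: "\<forall>j. (w *\<^sub>R M0)$j \<le> e$j"
  proof
    fix j show "(w *\<^sub>R M0)$j \<le> e$j"
    proof (cases "j \<in> P")
      case True
      then have "w \<le> e$j / M0$j" using wle[OF True] by (simp add: r_def)
      then show ?thesis using True by (simp add: P_def pos_le_divide_eq)
    next
      case False
      then have "M0$j = 0" using M0n[of j] by (simp add: P_def)
      then show ?thesis using en[of j] by simp
    qed
  qed
  have Mi0: "M0$i > 0" using iP by (simp add: P_def)
  have eqi: "(w *\<^sub>R M0)$i = e$i" using ri Mi0 by (simp add: r_def field_simps)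
  have le1: "(w *\<^sub>R M0)$i \<le> 1" using eqi e by (auto simp: prob_box_def)
  have "f (w *\<^sub>R M0) $ i \<le> f e $ i"
    using B a_nn ge eqi le1 by (intro fld_coop) (auto simp: nnB_def nn_def)
  then have c1: "f (w *\<^sub>R M0) $ i \<le> 0" using e(2) by simp
  have fw: "f (w *\<^sub>R M0) $ i = a$i * (1 - w) * (lam$i + w * M0$i * (B *v M0)$i)"
    by (rule fld_scale) (simp add: M0_eq)
  have Mi: "M0$i > 0" using iP by (simp add: P_def)
  have bpos: "lam$i + w * M0$i * (B *v M0)$i > 0"
  proof (cases "lam$i > 0")
    case True
    moreover have "(B *v M0)$i \<ge> 0" using B M0_box by (intro Bv_nonneg) (auto simp: nnB_def prob_box_def)
    ultimately show ?thesis using w0 Mi by (simp add: add_pos_nonneg)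
  next
    case False
    then have l0: "lam$i = 0" using lam unfolding nn_def by (metis le_less)
    then have "(B *v M0)$i > 0" using M0_pos_drive[OF Mi] by simp
    then show ?thesis using l0 w0 Mi by simp
  qed
  have "f (w *\<^sub>R M0) $ i > 0" unfolding fw using apos w1 bpos by simp
  with c1 show False by simp
qed

lemma lower_sol:
  assumes v: "0 \<le> v" "v \<le> 1" and x: "is_solution f prob_box x"
    and x0: "\<forall>i. v * M0$i \<le> x 0 $ i" and t: "0 \<le> t"
  shows "v * M0$i \<le> x t $ i"
proof -
  have vb: "v *\<^sub>R M0 \<in> prob_box" by (rule scale_box[OF M0_box v])
  have fv: "\<forall>i. f (v *\<^sub>R M0) $ i \<ge> 0" using f_scale_M0[OF v] by auto
  obtain s where s: "s 0 = v *\<^sub>R M0" "is_solution f prob_box s" "\<forall>t\<ge>0. \<forall>i. (v *\<^sub>R M0) $ i \<le> s t $ i"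
    using sub_sol[OF vb fv] by blast
  have "s t $ i \<le> x t $ i" by (rule compare[OF s(2) x _ t]) (use s(1) x0 in simp)
  moreover have "(v *\<^sub>R M0) $ i \<le> s t $ i" using s(3) t by blast
  ultimately show ?thesis by simp
qed

lemma lower_conv:
  assumes v: "0 < v" "v \<le> 1"
  shows "\<exists>s. s 0 = v *\<^sub>R M0 \<and> is_solution f prob_box s \<and> (s \<longlongrightarrow> M0) at_top"
proof -
  have vb: "v *\<^sub>R M0 \<in> prob_box" by (rule scale_box[OF M0_box]) (use v in auto)
  have fv: "\<forall>i. f (v *\<^sub>R M0) $ i \<ge> 0" using f_scale_M0 v by auto
  obtain s where s: "s 0 = v *\<^sub>R M0" "is_solution f prob_box s" "\<forall>t\<ge>0. \<forall>i. (v *\<^sub>R M0) $ i \<le> s t $ i"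
    using sub_sol[OF vb fv] by blast
  have smono: "s t1 $ i \<le> s t2 $ i" if "0 \<le> t1" "t1 \<le> t2" for t1 t2 i
  proof -
    have sh: "is_solution f prob_box (\<lambda>t. s (t + (t2 - t1)))" by (rule sol_shift[OF s(2)]) (use that in auto)
    have "s t1 $ i \<le> s (t1 + (t2 - t1)) $ i"
      by (rule compare[OF s(2) sh _ that(1)]) (use s(1) s(3) that in auto)
    then show ?thesis by simp
  qed
  have ub: "s t $ i \<le> 1" if "0 \<le> t" for t i using sol_in[OF s(2) that] by (auto simp: prob_box_def)
  have "\<exists>L. ((\<lambda>t. s t $ i) \<longlongrightarrow> L) at_top \<and> (\<forall>t\<ge>0. s t $ i \<le> L)" for i
    by (rule mono_lim_inc) (auto intro: smono ub)
  then obtain L where L: "\<And>i. ((\<lambda>t. s t $ i) \<longlongrightarrow> L i) at_top" by metis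
  define e where "e = (\<chi> i. L i)"
  have se: "(s \<longlongrightarrow> e) at_top" by (rule vec_tendstoI) (simp add: e_def L)
  have eb: "e \<in> prob_box" by (rule lim_in_box[OF s(2) se])
  have fe: "f e = 0" by (rule lim_equil[OF s(2) se])
  have lo: "v * M0$i \<le> e$i" for i
  proof -
    have "\<forall>\<^sub>F t in at_top. v * M0$i \<le> s t $ i"
      unfolding eventually_at_top_linorder using s(3) by (intro exI[of _ 0]) auto
    then show ?thesis by (rule tendsto_lowerbound[OF tendsto_vec_nth[OF se]]) simp
  qed
  have hi: "e$i \<le> M0$i" for i by (rule equil_le_M0[OF eb fe])
  have "e = M0" by (rule squeeze_eq[OF eb fe v(1)]) (use lo hi in auto)
  then show ?thesis using s se by blast
qed

lemma near_lower:
  assumes v: "0 < v" "v < 1"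
  shows "\<exists>del>0. \<forall>u\<in>prob_box. dist u M0 < del \<longrightarrow> (\<forall>i. v * M0$i \<le> u$i)"
proof -
  define A where "A = insert 1 ((\<lambda>j. M0$j) ` {j. M0$j > 0})"
  have finA: "finite A" "A \<noteq> {}" by (auto simp: A_def)
  have Apos: "\<forall>x\<in>A. 0 < x" by (auto simp: A_def)
  define m where "m = Min A"
  have m0: "m > 0" unfolding m_def using Min_gr_iff[OF finA] Apos by blast
  have mle: "m \<le> M0$j" if "M0$j > 0" for j unfolding m_def using that finA by (intro Min_le) (auto simp: A_def)
  show ?thesis
  proof (intro exI[of _ "(1 - v) * m"] conjI ballI impI allI)
    show "0 < (1 - v) * m" using v m0 by simp
    fix u i assume u: "u \<in> prob_box" and du: "dist u M0 < (1 - v) * m"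
    show "v * M0$i \<le> u$i"
    proof (cases "M0$i > 0")
      case True
      have "\<bar>u$i - M0$i\<bar> \<le> norm (u - M0)" using component_le_norm_cart[of "u - M0" i] by simp
      then have "M0$i - u$i < (1 - v) * m" using du by (simp add: dist_norm)
      also have "\<dots> \<le> (1 - v) * M0$i" using mle[OF True] v by (intro mult_left_mono) auto
      finally show ?thesis by (simp add: algebra_simps)
    next
      case False
      then have "M0$i = 0" using M0_box by (auto simp: prob_box_def le_less)
      then show ?thesis using u by (simp add: prob_box_def)
    qed
  qed
qed

end

lemma sq_norm_sum: "(norm (u::real^'n))^2 = (\<Sum>j\<in>UNIV. (u$j)^2)"
proof -
  have "(norm u)^2 = inner u u" by (rule power2_norm_eq_inner)
  also have "\<dots> = (\<Sum>j\<in>UNIV. inner (u$j) (u$j))" by (rule inner_vec_def)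
  finally show ?thesis by (simp add: power2_eq_square)
qed

lemma inner_sum: "inner (u::real^'n) w = (\<Sum>j\<in>UNIV. u$j * w$j)"
  by (simp add: inner_vec_def)

context sis begin

lemma near_gron:
  assumes x: "is_solution f prob_box x" and t: "0 \<le> t"
  shows "norm (x t - M0) \<le> norm (x 0 - M0) * exp (Lf * t)"
proof -
  define psi where "psi s = (\<Sum>j\<in>UNIV. (x s $ j - M0 $ j)^2)" for s
  define psi' where "psi' s = (\<Sum>j\<in>UNIV. 2 * (x s $ j - M0 $ j) * f (x s) $ j)" for s
  have der: "(psi has_real_derivative psi' s) (at s within {0..})" if s: "0 \<le> s" for s
    unfolding psi_def psi'_def
  proof (rule DERIV_sum)
    fix j :: 'n
    have dj: "((\<lambda>s. x s $ j - M0 $ j) has_real_derivative f (x s) $ j) (at s within {0..})"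
      using DERIV_diff[OF sol_comp[OF x s, of j] DERIV_const[of "M0 $ j"]] by simp
    have "((\<lambda>s. (x s $ j - M0 $ j) * (x s $ j - M0 $ j)) has_real_derivative
        f (x s) $ j * (x s $ j - M0 $ j) + f (x s) $ j * (x s $ j - M0 $ j)) (at s within {0..})"
      by (rule DERIV_mult[OF dj dj])
    then show "((\<lambda>s. (x s $ j - M0 $ j)\<^sup>2) has_real_derivative 2 * (x s $ j - M0 $ j) * f (x s) $ j)
        (at s within {0..})"
      by (simp add: power2_eq_square algebra_simps)
  qed
  have psin: "psi s = (norm (x s - M0))^2" for s unfolding psi_def sq_norm_sum by simp
  have bnd: "psi' s \<le> (2 * Lf) * psi s" if s: "0 \<le> s" for s
  proof -
    have "psi' s = 2 * inner (x s - M0) (f (x s) - f M0)"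
      unfolding psi'_def inner_sum M0_eq by (simp add: sum_distrib_left algebra_simps)
    also have "\<dots> \<le> 2 * (norm (x s - M0) * norm (f (x s) - f M0))"
      by (simp add: norm_cauchy_schwarz)
    also have "\<dots> \<le> 2 * (norm (x s - M0) * (Lf * norm (x s - M0)))"
      using Lf(2)[OF sol_in[OF x s] M0_box] by (intro mult_left_mono) auto
    also have "\<dots> = (2 * Lf) * psi s" unfolding psin by (simp add: power2_eq_square)
    finally show ?thesis .
  qed
  have "psi t \<le> psi 0 * exp ((2 * Lf) * t)" by (rule gronwall_diff[OF der bnd t])
  also have "\<dots> = (norm (x 0 - M0) * exp (Lf * t))^2"
    unfolding psin by (simp add: power_mult_distrib exp_double[symmetric] algebra_simps)
  finally have "(norm (x t - M0))^2 \<le> (norm (x 0 - M0) * exp (Lf * t))^2" unfolding psin .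
  then show ?thesis by (rule power2_le_imp_le) simp
qed

lemma M0_stable: "stable_equilibrium f prob_box M0"
  unfolding stable_equilibrium_def
proof (intro conjI allI impI)
  show "M0 \<in> prob_box" by (rule M0_box)
  show "f M0 = 0" by (rule M0_eq)
next
  fix eps :: real assume eps: "eps > 0"
  define N where "N = real CARD('n)"
  have N1: "N \<ge> 1" unfolding N_def by (simp add: Suc_le_eq)
  define eta where "eta = eps / (2 * N)"
  have eta: "eta > 0" "N * eta = eps / 2" using eps N1 by (auto simp: eta_def)
  have "\<forall>\<^sub>F t in at_top. dist (ztraj t) M0 < eta"
    using ztraj_lim eta(1) by (simp add: tendsto_iff)
  then obtain T0 where T0: "\<And>t. t \<ge> T0 \<Longrightarrow> dist (ztraj t) M0 < eta"
    unfolding eventually_at_top_linorder by blast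
  define T where "T = max 0 T0"
  have T: "0 \<le> T" "\<And>t. T \<le> t \<Longrightarrow> dist (ztraj t) M0 < eta" using T0 by (auto simp: T_def)
  define v where "v = max (1/2) (1 - eta / 2)"
  have v12: "1/2 \<le> v" "1 - eta / 2 \<le> v" by (auto simp: v_def)
  have v1: "0 < v" using v12 by linarith
  have v2: "v < 1" using eta(1) by (simp add: v_def)
  have v3: "1 - v \<le> eta / 2" using v12 by linarith
  note v = v1 v2 v3
  obtain d1 where d1: "d1 > 0" "\<And>u i. u \<in> prob_box \<Longrightarrow> dist u M0 < d1 \<Longrightarrow> v * M0$i \<le> u$i"
    using near_lower[OF v(1,2)] by blast
  define d2 where "d2 = eps * exp (- (Lf * T))"
  have d2: "d2 > 0" using eps by (simp add: d2_def)
  show "\<exists>d>0. \<forall>x. is_solution f prob_box x \<and> dist (x 0) M0 < d \<longrightarrow> (\<forall>t\<ge>0. dist (x t) M0 < eps)"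
  proof (intro exI[of _ "min d1 d2"] conjI allI impI)
    show "0 < min d1 d2" using d1 d2 by simp
    fix x and t :: real assume H: "is_solution f prob_box x \<and> dist (x 0) M0 < min d1 d2" and t: "0 \<le> t"
    then have x: "is_solution f prob_box x" and dx: "dist (x 0) M0 < d1" "dist (x 0) M0 < d2" by auto
    have x0b: "x 0 \<in> prob_box" using sol_in[OF x, of 0] by simp
    show "dist (x t) M0 < eps"
    proof (cases "T \<le> t")
      case True
      have comp: "\<bar>(x t - M0) $ i\<bar> \<le> eta" for i
      proof -
        have lo: "v * M0$i \<le> x t $ i"
          by (rule lower_sol[OF _ _ x _ t]) (use v d1(2)[OF x0b dx(1)] in auto)
        have up: "x t $ i \<le> ztraj t $ i" by (rule le_ztraj[OF x t])
        have zt: "\<bar>ztraj t $ i - M0 $ i\<bar> < eta"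
          using component_le_norm_cart[of "ztraj t - M0" i] T(2)[OF True] by (simp add: dist_norm)
        have m1: "M0 $ i \<le> 1" "0 \<le> M0 $ i" using M0_box by (auto simp: prob_box_def)
        have "(1 - v) * M0$i \<le> 1 - v" using m1 v by (simp add: mult_left_le_one_le)
        then show ?thesis using lo up zt v(3) eta(1) by (auto simp: algebra_simps abs_le_iff)
      qed
      have "norm (x t - M0) \<le> (\<Sum>i\<in>UNIV. \<bar>(x t - M0) $ i\<bar>)" by (rule norm_le_l1_cart)
      also have "\<dots> \<le> (\<Sum>i\<in>(UNIV::'n set). eta)" by (intro sum_mono comp)
      also have "\<dots> = N * eta" by (simp add: N_def)
      finally show ?thesis using eta eps by (simp add: dist_norm)
    next
      case False
      have "norm (x t - M0) \<le> norm (x 0 - M0) * exp (Lf * t)" by (rule near_gron[OF x t])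
      also have "\<dots> \<le> norm (x 0 - M0) * exp (Lf * T)"
        using False Lf(1) by (intro mult_left_mono) (auto intro: mult_left_mono)
      also have "\<dots> < d2 * exp (Lf * T)" using dx(2) by (simp add: dist_norm)
      also have "\<dots> = eps" by (simp add: d2_def exp_minus field_simps)
      finally show ?thesis by (simp add: dist_norm)
    qed
  qed
next
  obtain d where d: "d > 0" "\<And>u i. u \<in> prob_box \<Longrightarrow> dist u M0 < d \<Longrightarrow> (1/2) * M0$i \<le> u$i"
    using near_lower[of "1/2"] by auto
  obtain s where s: "s 0 = (1/2) *\<^sub>R M0" "is_solution f prob_box s" "(s \<longlongrightarrow> M0) at_top"
    using lower_conv[of "1/2"] by auto
  show "\<exists>d>0. \<forall>x. is_solution f prob_box x \<and> dist (x 0) M0 < d \<longrightarrow> (x \<longlongrightarrow> M0) at_top"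
  proof (intro exI[of _ d] conjI allI impI)
    show "d > 0" by (rule d(1))
    fix x assume H: "is_solution f prob_box x \<and> dist (x 0) M0 < d"
    then have x: "is_solution f prob_box x" and dx: "dist (x 0) M0 < d" by auto
    have x0b: "x 0 \<in> prob_box" using sol_in[OF x, of 0] by simp
    show "(x \<longlongrightarrow> M0) at_top"
    proof (rule vec_tendstoI)
      fix i
      have lo: "\<forall>\<^sub>F t in at_top. s t $ i \<le> x t $ i"
        unfolding eventually_at_top_linorder
      proof (intro exI[of _ 0] allI impI)
        fix t :: real assume t0: "0 \<le> t"
        show "s t $ i \<le> x t $ i"
          by (rule compare[OF s(2) x _ t0]) (use s(1) d(2)[OF x0b dx] in auto)
      qed
      have up: "\<forall>\<^sub>F t in at_top. x t $ i \<le> ztraj t $ i"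
        unfolding eventually_at_top_linorder using le_ztraj[OF x] by blast
      show "((\<lambda>t. x t $ i) \<longlongrightarrow> M0 $ i) at_top"
        by (rule tendsto_sandwich[OF lo up tendsto_vec_nth[OF s(3)] tendsto_vec_nth[OF ztraj_lim]])
    qed
  qed
qed

lemma stable_unique:
  assumes st: "stable_equilibrium f prob_box p"
  shows "p = M0"
proof (rule ccontr)
  assume ne: "p \<noteq> M0"
  have pb: "p \<in> prob_box" and fp: "f p = 0" using st by (auto simp: stable_equilibrium_def)
  obtain del where del: "del > 0" "\<And>x. is_solution f prob_box x \<Longrightarrow> dist (x 0) p < del \<Longrightarrow> (x \<longlongrightarrow> p) at_top"
    using st unfolding stable_equilibrium_def by blast
  have pM: "p$i \<le> M0$i" for i by (rule equil_le_M0[OF pb fp])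
  obtain k where k: "p$k < M0$k" using ne pM by (metis le_less vec_eq_iff)
  define tau where "tau = min 1 (del / (2 * (norm (M0 - p) + 1)))"
  have np: "2 * (norm (M0 - p) + 1) > 0" by (simp add: add_nonneg_pos)
  have tau: "0 < tau" "tau \<le> 1" using del np by (auto simp: tau_def)
  have tn: "tau * norm (M0 - p) < del"
  proof -
    have "tau * norm (M0 - p) \<le> (del / (2 * (norm (M0 - p) + 1))) * (norm (M0 - p) + 1)"
    proof -
      have dn: "0 \<le> del / (2 * (norm (M0 - p) + 1))" using del np by (intro divide_nonneg_pos) auto
      show ?thesis unfolding tau_def using dn by (intro mult_mono) auto
    qed
    also have "\<dots> = del / 2"
    proof -
      have gen: "\<And>x y::real. y \<noteq> 0 \<Longrightarrow> x / (2*y) * y = x/2" by (simp add: field_simps)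
      have "norm (M0 - p) + 1 \<noteq> 0" using norm_ge_zero[of "M0 - p"] by linarith
      then show ?thesis by (rule gen)
    qed
    finally show ?thesis using del by simp
  qed
  define y where "y = p + tau *\<^sub>R (M0 - p)"
  have yb: "y \<in> prob_box"
  proof -
    have "0 \<le> y$i \<and> y$i \<le> 1" for i
    proof -
      have "p$i \<le> y$i" using pM[of i] tau by (simp add: y_def)
      moreover have "y$i \<le> M0$i"
      proof -
        have "tau * (M0$i - p$i) \<le> 1 * (M0$i - p$i)" using tau pM[of i] by (intro mult_right_mono) auto
        then show ?thesis by (simp add: y_def algebra_simps)
      qed
      ultimately show ?thesis using pb M0_box by (auto simp: prob_box_def intro: order_trans)
    qed
    then show ?thesis by (simp add: prob_box_def)
  qed
  have fy: "\<forall>i. f y $ i \<ge> 0"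
  proof
    fix i
    have "f (p + tau *\<^sub>R (M0 - p)) $ i \<ge> (1 - tau) * f p $ i + tau * f (p + (M0 - p)) $ i"
      using B a_nn pM tau by (intro fld_concave) (auto simp: nnB_def nn_def)
    then show "f y $ i \<ge> 0" using fp M0_eq by (simp add: y_def)
  qed
  obtain x where x: "x 0 = y" "is_solution f prob_box x" "\<forall>t\<ge>0. \<forall>i. y $ i \<le> x t $ i"
    using sub_sol[OF yb fy] by blast
  have "dist (x 0) p = tau * norm (M0 - p)" using tau by (simp add: x(1) y_def dist_norm)
  then have "(x \<longlongrightarrow> p) at_top" using del(2)[OF x(2)] tn by simp
  then have lk: "((\<lambda>t. x t $ k) \<longlongrightarrow> p $ k) at_top" by (rule tendsto_vec_nth)
  have "\<forall>\<^sub>F t in at_top. y $ k \<le> x t $ k"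
    unfolding eventually_at_top_linorder using x(3) by (intro exI[of _ 0]) auto
  then have "y $ k \<le> p $ k" by (rule tendsto_lowerbound[OF lk]) simp
  moreover have "y $ k > p $ k" using tau k by (simp add: y_def)
  ultimately show False by simp
qed

lemma the_stable: "(THE p. stable_equilibrium f prob_box p) = M0"
  using M0_stable stable_unique by blast

end

lemma root_le:
  fixes lam1 lam2 a d :: "real^'n" and B :: "real^'n^'n"
  assumes B: "nnB B" and a: "\<forall>i. a$i > 0" and l12: "\<forall>i. lam1$i \<le> lam2$i" and l2: "\<forall>i. lam2$i > 0"
    and p: "p \<in> prob_box" "fld lam1 a d B p = 0"
    and p': "\<forall>i. p'$i > 0" "fld lam2 a d B p' = 0"
  shows "p$i \<le> p'$i"
proof -
  define r where "r j = p$j / p'$j" for j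
  define u where "u = Max (range r)"
  have fr: "finite (range r)" "range r \<noteq> {}" by auto
  have "u \<in> range r" unfolding u_def by (rule Max_in[OF fr])
  then obtain k where rk: "r k = u" by blast
  have ru: "r j \<le> u" for j unfolding u_def by (rule Max_ge) auto
  have "u \<le> 1"
  proof (rule ccontr)
    assume "\<not> u \<le> 1"
    then have u1: "u > 1" by simp
    have pkp: "p'$k > 0" using p'(1) by simp
    have pk: "p$k = u * p'$k" using rk pkp by (simp add: r_def field_simps)
    have ge: "\<forall>j. p$j \<le> (u *\<^sub>R p')$j"
    proof
      fix j
      have "p$j / p'$j \<le> u" using ru[of j] by (simp add: r_def)
      then show "p$j \<le> (u *\<^sub>R p')$j" using p'(1) by (simp add: pos_divide_le_eq)
    qed
    have pk1: "p$k \<le> 1" using p(1) by (simp add: prob_box_def)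
    have "fld lam1 a d B p $ k \<le> fld lam1 a d B (u *\<^sub>R p') $ k"
      using B a ge pk pk1 by (intro fld_coop) (auto simp: nnB_def less_imp_le)
    then have c1: "0 \<le> fld lam1 a d B (u *\<^sub>R p') $ k" using p(2) by simp
    have "fld lam1 a d B (u *\<^sub>R p') $ k - fld lam2 a d B (u *\<^sub>R p') $ k
        = (1 - u * p'$k) * a$k * (lam1$k - lam2$k)"
      unfolding fld_nth by (simp add: algebra_simps)
    also have "\<dots> \<le> 0"
    proof -
      have "0 \<le> (1 - u * p'$k) * a$k" using pk pk1 a by (simp add: less_imp_le)
      then show ?thesis using l12 by (simp add: mult_nonneg_nonpos)
    qed
    finally have c2: "fld lam1 a d B (u *\<^sub>R p') $ k \<le> fld lam2 a d B (u *\<^sub>R p') $ k" by simp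
    have f2: "fld lam2 a d B (u *\<^sub>R p') $ k = a$k * (1 - u) * (lam2$k + u * p'$k * (B *v p')$k)"
      by (rule fld_scale) (simp add: p'(2))
    have bp: "(B *v p')$k \<ge> 0" using B p'(1) by (intro Bv_nonneg) (auto simp: nnB_def less_imp_le)
    have "u * p'$k * (B *v p')$k \<ge> 0" using u1 pkp bp by simp
    then have pos: "lam2$k + u * p'$k * (B *v p')$k > 0"
      using l2[rule_format, of k] by linarith
    have "fld lam2 a d B (u *\<^sub>R p') $ k < 0"
      unfolding f2 using a u1 pos by (simp add: mult_pos_neg mult_neg_pos)
    with c1 c2 show False by simp
  qed
  then have "r i \<le> 1" using ru[of i] by simp
  moreover have "p'$i > 0" using p'(1) by simp
  ultimately show ?thesis by (simp add: r_def divide_le_eq_1)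
qed

lemma pos_root_box:
  fixes lam a d :: "real^'n" and B :: "real^'n^'n"
  assumes B: "nnB B" and a: "\<forall>i. a$i > 0" and d: "\<forall>i. d$i > 0" and lam: "nn lam"
    and p: "\<forall>i. p$i > 0" "fld lam a d B p = 0"
  shows "p \<in> prob_box"
proof -
  have "p$i < 1" for i
  proof -
    have eq: "(1 - p$i) * (a$i * (lam$i + (B *v p)$i)) = d$i * p$i"
      using p(2) fld_nth[of lam a d B p i] by (simp add: algebra_simps)
    have "d$i * p$i > 0" using d p(1) by simp
    moreover have "a$i * (lam$i + (B *v p)$i) \<ge> 0"
    proof -
      have "(B *v p)$i \<ge> 0" using B p(1) by (intro Bv_nonneg) (auto simp: nnB_def less_imp_le)
      moreover have "lam$i \<ge> 0" "a$i \<ge> 0" using lam a by (auto simp: nn_def less_imp_le)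
      ultimately show ?thesis by simp
    qed
    ultimately show ?thesis
    proof -
      assume A: "d$i * p$i > 0" "a$i * (lam$i + (B *v p)$i) \<ge> 0"
      show ?thesis
      proof (rule ccontr)
        assume "\<not> p$i < 1"
        then have "(1 - p$i) * (a$i * (lam$i + (B *v p)$i)) \<le> 0"
          using A(2) by (intro mult_nonpos_nonneg) auto
        then show False using eq A(1) by linarith
      qed
    qed
  qed
  then show ?thesis using p(1) by (auto simp: prob_box_def less_imp_le)
qed

lemma (in sis) pos_root_exists:
  assumes lp: "\<forall>i. lam$i > 0"
  shows "\<exists>p. (\<forall>i. p$i > 0) \<and> f p = 0"
proof -
  define qv where "qv i = a$i * lam$i / (a$i * lam$i + d$i)" for i
  define c where "c = Min (range qv)"
  have qv: "0 < qv i" "qv i < 1" for i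
  proof -
    have ap: "a$i * lam$i > 0" using apos lp by simp
    have dp: "d$i > 0" using dpos by simp
    show "0 < qv i" unfolding qv_def using ap dp by simp
    show "qv i < 1" unfolding qv_def using ap dp by simp
  qed
  have fr: "finite (range qv)" "range qv \<noteq> {}" by auto
  have "c \<in> range qv" unfolding c_def by (rule Min_in[OF fr])
  then obtain k where ck: "c = qv k" by blast
  have cle: "c \<le> qv i" for i unfolding c_def by (rule Min_le) auto
  have c: "0 < c" "c < 1" using qv[of k] ck by auto
  define w where "w = c *\<^sub>R one_v"
  have wb: "w \<in> prob_box" using c by (simp add: w_def one_v_def prob_box_def)
  have fw: "\<forall>i. f w $ i \<ge> 0"
  proof
    fix i
    have bw: "(B *v w)$i \<ge> 0" using B c by (intro Bv_nonneg) (auto simp: nnB_def w_def one_v_def)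
    have "c * (a$i * lam$i + d$i) \<le> a$i * lam$i"
      using cle[of i] apos dpos lp by (simp add: qv_def pos_le_divide_eq add_pos_pos)
    then have A: "d$i * c \<le> (1 - c) * a$i * lam$i" by (simp add: algebra_simps)
    have "(1 - c) * a$i * lam$i \<le> (1 - c) * a$i * (lam$i + (B *v w)$i)"
      using c apos bw by (intro mult_left_mono) (auto simp: less_imp_le)
    then show "f w $ i \<ge> 0" using A by (simp add: fld_nth w_def one_v_def)
  qed
  have "\<forall>i. M0$i > 0"
  proof
    fix i
    have "w$i \<le> M0$i" by (rule sub_le_M0[OF wb fw])
    then show "M0$i > 0" using c by (simp add: w_def one_v_def)
  qed
  then show ?thesis using M0_eq by blast
qed

definition lamv :: "real^'n \<Rightarrow> real \<Rightarrow> real^'n" where "lamv lam e = (\<chi> i. lam$i + e)"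
definition qa :: "('n \<Rightarrow> real \<Rightarrow> real) \<Rightarrow> real^'n \<Rightarrow> real^'n" where "qa q s = (\<chi> i. q i (s$i))"

lemma field_eq: "sis_field lam delta B q s = fld lam (qa q s) delta B"
  by (rule ext) (simp add: sis_field_def fld_def qa_def)

lemma pbar_zero:
  fixes lam delta :: "real^'n" and B :: "real^'n^'n"
  assumes lam: "\<forall>i. lam $ i \<ge> 0" and delta: "\<forall>i. delta $ i > 0" and B: "\<forall>i j. B $ i $ j \<ge> 0"
    and qp: "\<forall>i. q i (s$i) > 0"
  shows "pbar lam delta B q 0 s \<in> prob_box \<and> fld lam (qa q s) delta B (pbar lam delta B q 0 s) = 0"
proof -
  interpret sis lam "qa q s" delta B
    using lam delta B qp by unfold_locales (auto simp: nn_def nnB_def qa_def)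
  have "pbar lam delta B q 0 s = M0"
    unfolding pbar_def field_eq using the_stable by simp
  then show ?thesis using M0_box M0_eq by simp
qed

lemma pbar_pos:
  fixes lam delta :: "real^'n" and B :: "real^'n^'n"
  assumes lam: "\<forall>i. lam $ i \<ge> 0" and delta: "\<forall>i. delta $ i > 0" and B: "\<forall>i j. B $ i $ j \<ge> 0"
    and qp: "\<forall>i. q i (s$i) > 0" and e: "e > 0"
  shows "(\<forall>i. pbar lam delta B q e s $ i > 0) \<and> fld (lamv lam e) (qa q s) delta B (pbar lam delta B q e s) = 0"
proof -
  let ?a = "qa q s" and ?l = "lamv lam e"
  have lp: "\<forall>i. ?l $ i > 0"
  proof
    fix i have "lam $ i \<ge> 0" using lam by simp
    then show "?l $ i > 0" using e unfolding lamv_def by simp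
  qed
  interpret sis ?l ?a delta B
    using lp delta B qp by unfold_locales (auto simp: nn_def nnB_def qa_def less_imp_le)
  have eqv: "(\<forall>i. (1 - p $ i) * (lam $ i + e + (B *v p) $ i) - delta $ i * p $ i / q i (s $ i) = 0)
      \<longleftrightarrow> fld ?l ?a delta B p = 0" for p
  proof -
    have "(1 - p $ i) * (lam $ i + e + (B *v p) $ i) - delta $ i * p $ i / q i (s $ i) = 0
        \<longleftrightarrow> fld ?l ?a delta B p $ i = 0" for i
    proof -
      have qi: "q i (s$i) \<noteq> 0" using qp by (metis less_irrefl)
      have "fld ?l ?a delta B p $ i
          = q i (s$i) * ((1 - p $ i) * (lam $ i + e + (B *v p) $ i) - delta $ i * p $ i / q i (s $ i))"
        using qi by (simp add: fld_nth lamv_def qa_def field_simps)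
      then show ?thesis using qi by simp
    qed
    then show ?thesis by (simp add: vec_eq_iff)
  qed
  have P: "(\<lambda>p. (\<forall>i. p $ i > 0) \<and> (\<forall>i. (1 - p $ i) * (lam $ i + e + (B *v p) $ i) - delta $ i * p $ i / q i (s $ i) = 0))
      = (\<lambda>p. (\<forall>i. p $ i > 0) \<and> f p = 0)"
    using eqv by auto
  obtain p0 where p0: "\<forall>i. p0 $ i > 0" "f p0 = 0" using pos_root_exists[OF lp] by blast
  have uniq: "p = p0" if "\<forall>i. p $ i > 0" "f p = 0" for p
  proof -
    have pb: "p \<in> prob_box" by (rule pos_root_box[OF B apos dpos lam that])
    have p0b: "p0 \<in> prob_box" by (rule pos_root_box[OF B apos dpos lam p0])
    have "p $ i \<le> p0 $ i" for i by (rule root_le[OF B apos _ lp pb that(2) p0]) simp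
    moreover have "p0 $ i \<le> p $ i" for i by (rule root_le[OF B apos _ lp p0b p0(2) that]) simp
    ultimately show ?thesis by (simp add: vec_eq_iff order_antisym)
  qed
  have "pbar lam delta B q e s = (THE p. (\<forall>i. p $ i > 0) \<and> (\<forall>i. (1 - p $ i) * (lam $ i + e + (B *v p) $ i) - delta $ i * p $ i / q i (s $ i) = 0))"
    unfolding pbar_def using e by simp
  also have "\<dots> = (THE p. (\<forall>i. p $ i > 0) \<and> f p = 0)" by (simp only: P)
  also have "\<dots> = p0"
  proof (rule the_equality)
    show "(\<forall>i. p0 $ i > 0) \<and> f p0 = 0" using p0 by simp
  next
    fix p assume "(\<forall>i. p $ i > 0) \<and> f p = 0"
    then show "p = p0" using uniq by blast
  qed
  finally show ?thesis using p0 by simp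
qed

lemma pbar_mono:
  fixes lam delta :: "real^'n" and B :: "real^'n^'n"
  assumes lam: "\<forall>i. lam $ i \<ge> 0" and delta: "\<forall>i. delta $ i > 0" and B: "\<forall>i j. B $ i $ j \<ge> 0"
    and qp: "\<forall>i. q i (s$i) > 0" and e: "0 \<le> e1" "e1 \<le> e2"
  shows "pbar lam delta B q e1 s $ i \<le> pbar lam delta B q e2 s $ i"
proof (cases "e1 = e2")
  case True then show ?thesis by simp
next
  case False
  then have e2: "e2 > 0" using e by simp
  have Bn: "nnB B" using B by (simp add: nnB_def)
  have ap: "\<forall>i. qa q s $ i > 0" using qp by (simp add: qa_def)
  have l2: "\<forall>i. lamv lam e2 $ i > 0" using lam e2 by (simp add: lamv_def add_nonneg_pos)
  note P2 = pbar_pos[where q=q and s=s, OF lam delta B qp e2]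
  show ?thesis
  proof (cases "e1 = 0")
    case True
    note P1 = pbar_zero[where q=q and s=s, OF lam delta B qp]
    show ?thesis unfolding True
      by (rule root_le[OF Bn ap _ l2 conjunct1[OF P1] conjunct2[OF P1] conjunct1[OF P2] conjunct2[OF P2]])
         (use e2 in \<open>simp add: lamv_def\<close>)
  next
    case False
    then have e1: "e1 > 0" using e by simp
    note P1 = pbar_pos[where q=q and s=s, OF lam delta B qp e1]
    have dn: "nn delta" using delta by (simp add: nn_def less_imp_le)
    have l1: "nn (lamv lam e1)" using lam e1 by (simp add: nn_def lamv_def)
    have b1: "pbar lam delta B q e1 s \<in> prob_box"
      by (rule pos_root_box[OF Bn ap delta l1 conjunct1[OF P1] conjunct2[OF P1]])
    show ?thesis
      by (rule root_le[OF Bn ap _ l2 b1 conjunct2[OF P1] conjunct1[OF P2] conjunct2[OF P2]])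
         (use e in \<open>simp add: lamv_def\<close>)
  qed
qed

theorem corollary1:
  fixes lam delta c :: "real^'n"
    and B :: "real^'n^'n"
    and S :: "(real^'n) set"
    and w :: "real^'n \<Rightarrow> real"
    and q :: "'n \<Rightarrow> real \<Rightarrow> real"
  assumes lam_nonneg: "\<forall>i. lam $ i \<ge> 0"
    and delta_pos: "\<forall>i. delta $ i > 0"
    and B_nonneg: "\<forall>i j. B $ i $ j \<ge> 0"
    and B_diag: "\<forall>i. B $ i $ i = 0"
    and weak: "weakly_connected B"
    and not_strong: "\<not> strongly_connected B"
    and S_sub: "S \<subseteq> {s. \<forall>i. s $ i \<ge> 0}"
    and S_convex: "convex S"
    and w_convex: "convex_on {s. \<forall>i. s $ i \<ge> 0} w"
    and c_nonneg: "\<forall>i. c $ i \<ge> 0"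
    and q_range: "\<forall>i x. x \<ge> 0 \<longrightarrow> 0 < q i x \<and> q i x \<le> 1"
    and q_decr: "\<forall>i x y. 0 \<le> x \<and> x \<le> y \<longrightarrow> q i y \<le> q i x"
    and q_strict_convex: "\<forall>i. strict_convex_on {0..} (q i)"
    and q_C1: "\<forall>i. \<exists>q'. (\<forall>x\<ge>0. (q i has_real_derivative q' x) (at x within {0..}))
                         \<and> continuous_on {0..} q'"
    and min_attained: "\<forall>eps\<ge>0. \<exists>s0\<in>S. \<forall>s\<in>S.
                          objective lam delta B q w c eps s0 \<le> objective lam delta B q w c eps s"
  shows "\<forall>e1 e2. 0 \<le> e1 \<and> e1 \<le> e2 \<longrightarrow>
           Fstar lam delta B q w c S e1 \<le> Fstar lam delta B q w c S e2"
proof (intro allI impI)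
  fix e1 e2 :: real assume e: "0 \<le> e1 \<and> e1 \<le> e2"
  have obj_mono: "objective lam delta B q w c e1 s \<le> objective lam delta B q w c e2 s" if s: "s \<in> S" for s
  proof -
    have qp: "\<forall>i. q i (s$i) > 0" using s S_sub q_range by auto
    have "c \<bullet> pbar lam delta B q e1 s \<le> c \<bullet> pbar lam delta B q e2 s"
      unfolding inner_vec_def
    proof (intro sum_mono)
      fix i
      have "pbar lam delta B q e1 s $ i \<le> pbar lam delta B q e2 s $ i"
        using pbar_mono[where q=q and s=s, OF lam_nonneg delta_pos B_nonneg qp] e by blast
      then show "c $ i \<bullet> pbar lam delta B q e1 s $ i \<le> c $ i \<bullet> pbar lam delta B q e2 s $ i"
        using c_nonneg by (simp add: mult_left_mono)
    qed
    then show ?thesis by (simp add: objective_def)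
  qed
  obtain s1 where s1: "s1 \<in> S" "\<forall>s\<in>S. objective lam delta B q w c e1 s1 \<le> objective lam delta B q w c e1 s"
  proof -
    have "0 \<le> e1" using e by linarith
    from min_attained[rule_format, OF this] show ?thesis using that by blast
  qed
  obtain s2 where s2: "s2 \<in> S" "\<forall>s\<in>S. objective lam delta B q w c e2 s2 \<le> objective lam delta B q w c e2 s"
  proof -
    have "0 \<le> e2" using e by linarith
    from min_attained[rule_format, OF this] show ?thesis using that by blast
  qed
  have bdd: "bdd_below ((\<lambda>s. objective lam delta B q w c e1 s) ` S)"
    using s1 by (auto intro!: bdd_belowI[of _ "objective lam delta B q w c e1 s1"])
  have "Fstar lam delta B q w c S e1 \<le> objective lam delta B q w c e1 s2"
    unfolding Fstar_def by (rule cINF_lower[OF bdd s2(1)])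
  also have "\<dots> \<le> objective lam delta B q w c e2 s2" by (rule obj_mono[OF s2(1)])
  also have "\<dots> = Fstar lam delta B q w c S e2"
    unfolding Fstar_def
    by (rule cInf_eq_minimum[symmetric]) (use s2 in auto)
  finally show "Fstar lam delta B q w c S e1 \<le> Fstar lam delta B q w c S e2" .
qed

end
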